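(* Let $N=r+1$, $M_n:=M_{1,n}=\sum_{i=1}^Nx_i^{\,n}\prod_{j\neq i}\frac{x_i}{x_i-x_j}\Gamma_i$ with $(\Gamma_if)(x)=f(\dots,qx_i,\dots)$, and $m(u)=\sum_{n\in\mathbb{Z}}u^nM_n$. For $\alpha\ge1$ and integers $a_1,\dots,a_\alpha$, let $M_{a_1,\dots,a_\alpha}$ be the coefficient of $u_1^{a_1}\cdots u_\alpha^{a_\alpha}$ in $\prod_{1\le i<j\le\alpha}(1-qu_j/u_i)\,m(u_1)\cdots m(u_\alpha)$. Then $$M_{a_1,\dots,a_\alpha}=\sum_{A\in ASM_\alpha}(-q)^{I(A)-N(A)}(1-q)^{N(A)}\prod_{i=1}^{\alpha}M_{a_i+\alpha-i-m_i(A)},$$ where the product is ordered with $i$ increasing from left to right.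
   Context: $ASM_\alpha$ is the set of $\alpha\times\alpha$ alternating sign matrices: matrices with entries in $\{-1,0,1\}$ whose nonzero entries alternate in sign along each row and column and whose row and column sums all equal $1$. For $A\in ASM_\alpha$: $I(A)=\sum_{i>k,\ j<\ell}A_{i,j}A_{k,\ell}$ is its inversion number, $N(A)$ is the number of entries equal to $-1$, and $m_i(A)=(Av)_i$ where $v=(\alpha-1,\alpha-2,\dots,1,0)^t$. The right-hand side is the quantum determinant of the matrix $(M_{a_j+i-j})_{1\le i,j\le\alpha}$. *)

theory Defs
  imports Main
begin

type_synonym 'a fn = "(nat \<Rightarrow> 'a) \<Rightarrow> 'a"

definition Mop :: "'a::field \<Rightarrow> nat \<Rightarrow> int \<Rightarrow> 'a fn \<Rightarrow> 'a fn" where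
  "Mop q N n f x = (\<Sum>i\<in>{1..N}. x i powi n * (\<Prod>j\<in>{1..N} - {i}. x i / (x i - x j))
                       * f (x(i := q * x i)))"

definition opprod :: "('b \<Rightarrow> 'b) list \<Rightarrow> 'b \<Rightarrow> 'b" where
  "opprod ops = foldr (\<circ>) ops id"

definition pairs :: "nat \<Rightarrow> (nat \<times> nat) set" where
  "pairs \<alpha> = {(i,j). 1 \<le> i \<and> i < j \<and> j \<le> \<alpha>}"

text \<open>Exponent of u_k in the monomial prod_{(i,j) in S} u_j/u_i.\<close>
definition shift_exp :: "(nat \<times> nat) set \<Rightarrow> nat \<Rightarrow> int" where
  "shift_exp S k = int (card {i. (i,k) \<in> S}) - int (card {j. (k,j) \<in> S})"

text \<open>Coefficient of u_1^{a_1}...u_alpha^{a_alpha} in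
  prod_{i<j} (1 - q u_j/u_i) m(u_1)...m(u_alpha), m(u) = sum_n u^n M_n,
  obtained by expanding the product over subsets S of pairs (applied to f at x).\<close>
definition Mcoef :: "'a::field \<Rightarrow> nat \<Rightarrow> nat \<Rightarrow> (nat \<Rightarrow> int) \<Rightarrow> 'a fn \<Rightarrow> 'a fn" where
  "Mcoef q N \<alpha> a f x = (\<Sum>S\<in>Pow (pairs \<alpha>). (- q) ^ card S *
      opprod (map (\<lambda>k. Mop q N (a k - shift_exp S k)) [1..<\<alpha>+1]) f x)"

definition ASM :: "nat \<Rightarrow> (nat \<Rightarrow> nat \<Rightarrow> int) set" where
  "ASM \<alpha> = {A.
     (\<forall>i j. (i \<notin> {1..\<alpha>} \<or> j \<notin> {1..\<alpha>}) \<longrightarrow> A i j = 0) \<and>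
     (\<forall>i\<in>{1..\<alpha>}. \<forall>j\<in>{1..\<alpha>}. A i j \<in> {-1, 0, 1}) \<and>
     (\<forall>i\<in>{1..\<alpha>}. (\<Sum>j\<in>{1..\<alpha>}. A i j) = 1) \<and>
     (\<forall>j\<in>{1..\<alpha>}. (\<Sum>i\<in>{1..\<alpha>}. A i j) = 1) \<and>
     (\<forall>i j1 j2. A i j1 \<noteq> 0 \<and> A i j2 \<noteq> 0 \<and> j1 < j2 \<and> (\<forall>j. j1 < j \<and> j < j2 \<longrightarrow> A i j = 0)
          \<longrightarrow> A i j1 = - A i j2) \<and>
     (\<forall>j i1 i2. A i1 j \<noteq> 0 \<and> A i2 j \<noteq> 0 \<and> i1 < i2 \<and> (\<forall>i. i1 < i \<and> i < i2 \<longrightarrow> A i j = 0)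
          \<longrightarrow> A i1 j = - A i2 j)}"

definition inv_num :: "nat \<Rightarrow> (nat \<Rightarrow> nat \<Rightarrow> int) \<Rightarrow> int" where
  "inv_num \<alpha> A = (\<Sum>i\<in>{1..\<alpha>}. \<Sum>j\<in>{1..\<alpha>}. \<Sum>k\<in>{1..\<alpha>}. \<Sum>l\<in>{1..\<alpha>}.
      if k < i \<and> j < l then A i j * A k l else 0)"

definition neg_num :: "nat \<Rightarrow> (nat \<Rightarrow> nat \<Rightarrow> int) \<Rightarrow> nat" where
  "neg_num \<alpha> A = card {(i,j). i \<in> {1..\<alpha>} \<and> j \<in> {1..\<alpha>} \<and> A i j = -1}"

definition mvec :: "nat \<Rightarrow> (nat \<Rightarrow> nat \<Rightarrow> int) \<Rightarrow> nat \<Rightarrow> int" where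
  "mvec \<alpha> A i = (\<Sum>j\<in>{1..\<alpha>}. A i j * (int \<alpha> - int j))"

end

theory Submission
  imports Defs "Jordan_Normal_Form.Determinant" "HOL-Computational_Algebra.Polynomial"
begin


definition sinc :: "nat \<Rightarrow> (nat \<Rightarrow> nat) \<Rightarrow> bool" where
  "sinc n s \<longleftrightarrow> (\<forall>j. Suc j < n \<longrightarrow> s j < s (Suc j))"

lemma sinc_less:
  assumes "sinc n s" "i < j" "j < n" shows "s i < s j"
  using assms(2,3)
proof (induction j)
  case 0 then show ?case by simp
next
  case (Suc j)
  have "s j < s (Suc j)" using assms(1) Suc.prems unfolding sinc_def by auto
  then show ?case using Suc by (cases "i = j") auto
qed

lemma sinc_le: "sinc n s \<Longrightarrow> i \<le> j \<Longrightarrow> j < n \<Longrightarrow> s i \<le> s j"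
  using sinc_less[of n s i j] by (cases "i = j") auto

lemma sinc_less_iff: "sinc n s \<Longrightarrow> i < n \<Longrightarrow> j < n \<Longrightarrow> s i < s j \<longleftrightarrow> i < j"
  using sinc_less[of n s i j] sinc_less[of n s j i] by (cases i j rule: linorder_cases) auto

lemma sinc_eq_iff: "sinc n s \<Longrightarrow> i < n \<Longrightarrow> j < n \<Longrightarrow> s i = s j \<longleftrightarrow> i = j"
  using sinc_less[of n s i j] sinc_less[of n s j i] by (cases i j rule: linorder_cases) auto

lemma sinc_inj: "sinc n s \<Longrightarrow> inj_on s {..<n}"
  by (auto simp: inj_on_def sinc_eq_iff)

lemma sinc_mono: "sinc n s \<Longrightarrow> m \<le> n \<Longrightarrow> sinc m s"
  by (auto simp: sinc_def)

definition srt :: "nat set \<Rightarrow> nat \<Rightarrow> nat" where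
  "srt S j = sorted_list_of_set S ! j"

lemma srt_sinc: "finite S \<Longrightarrow> sinc (card S) (srt S)"
  unfolding sinc_def srt_def
  using strict_sorted_list_of_set[of S] by (auto simp: sorted_wrt_iff_nth_less)

lemma srt_image: "finite S \<Longrightarrow> srt S ` {..<card S} = S"
proof -
  assume "finite S"
  then have "set (sorted_list_of_set S) = S" "length (sorted_list_of_set S) = card S" by auto
  then show ?thesis unfolding srt_def by (auto simp: set_conv_nth image_def)
qed

lemma srt_unique:
  assumes "sinc n f" "j < n" shows "srt (f ` {..<n}) j = f j"
proof -
  define xs where "xs = map f [0..<n]"
  have "sorted_wrt (<) xs" unfolding xs_def sorted_wrt_iff_nth_less
    using assms(1) by (auto simp: sinc_less)
  then have "sorted xs" "distinct xs" by (auto simp: strict_sorted_iff)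
  moreover have "set xs = f ` {..<n}" unfolding xs_def by auto
  ultimately have "sorted_list_of_set (f ` {..<n}) = xs"
    using sorted_list_of_set.idem_if_sorted_distinct[of xs] by simp
  then show ?thesis using assms(2) by (simp add: srt_def xs_def)
qed

definition interl :: "nat \<Rightarrow> (nat \<Rightarrow> nat) \<Rightarrow> (nat \<Rightarrow> nat) \<Rightarrow> bool" where
  "interl r s t \<longleftrightarrow> (\<forall>j<r. s j \<le> t j \<and> t j \<le> s (Suc j))"

lemma cnt_bounds:
  assumes "interl r s t"
  shows "card {b. b<r \<and> t b < p} \<le> card {a. a<Suc r \<and> s a < p}"
    and "card {a. a<Suc r \<and> s a < p} \<le> Suc (card {b. b<r \<and> t b < p})"
proof -
  show "card {b. b<r \<and> t b < p} \<le> card {a. a<Suc r \<and> s a < p}"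
  proof (rule card_mono)
    show "finite {a. a<Suc r \<and> s a < p}" by auto
    show "{b. b<r \<and> t b < p} \<subseteq> {a. a<Suc r \<and> s a < p}"
    proof
      fix b assume b: "b \<in> {b. b<r \<and> t b < p}"
      then have "s b \<le> t b" using assms by (auto simp: interl_def)
      then show "b \<in> {a. a<Suc r \<and> s a < p}" using b by auto
    qed
  qed
  have "{a. a<Suc r \<and> s a < p} \<subseteq> insert 0 (Suc ` {b. b<r \<and> t b < p})"
  proof
    fix a assume a: "a \<in> {a. a<Suc r \<and> s a < p}"
    show "a \<in> insert 0 (Suc ` {b. b<r \<and> t b < p})"
    proof (cases a)
      case (Suc b)
      then have "t b \<le> s a" using assms a by (auto simp: interl_def)
      then show ?thesis using a Suc by auto
    qed simp
  qed
  then have "card {a. a<Suc r \<and> s a < p} \<le> card (insert 0 (Suc ` {b. b<r \<and> t b < p}))"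
    by (rule card_mono[rotated]) auto
  also have "\<dots> \<le> Suc (card (Suc ` {b. b<r \<and> t b < p}))" by (rule card_insert_le_m1) auto
  also have "\<dots> \<le> Suc (card {b. b<r \<and> t b < p})" by (simp add: card_image_le)
  finally show "card {a. a<Suc r \<and> s a < p} \<le> Suc (card {b. b<r \<and> t b < p})" .
qed

lemma interl_from_cnt:
  assumes s: "sinc (Suc r) s" and t: "sinc r t"
    and c1: "\<And>p. card {b. b<r \<and> t b < p} \<le> card {a. a<Suc r \<and> s a < p}"
    and c2: "\<And>p. card {a. a<Suc r \<and> s a < p} \<le> Suc (card {b. b<r \<and> t b < p})"
  shows "interl r s t"
  unfolding interl_def
proof (intro allI impI conjI)
  fix j assume j: "j < r"
  show "s j \<le> t j"
  proof (rule ccontr)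
    assume "\<not> s j \<le> t j"
    then have lt: "t j < s j" by simp
    let ?p = "Suc (t j)"
    have "{..j} \<subseteq> {b. b<r \<and> t b < ?p}" using j by (auto simp: less_Suc_eq_le intro: sinc_le[OF t])
    then have "Suc j \<le> card {b. b<r \<and> t b < ?p}"
      using card_mono[of "{b. b<r \<and> t b < ?p}" "{..j}"] by auto
    moreover have "{a. a<Suc r \<and> s a < ?p} \<subseteq> {..<j}"
    proof
      fix a assume a: "a \<in> {a. a<Suc r \<and> s a < ?p}"
      show "a \<in> {..<j}"
      proof (rule ccontr)
        assume "a \<notin> {..<j}"
        then have "s j \<le> s a" using a by (intro sinc_le[OF s]) auto
        then show False using a lt by auto
      qed
    qed
    then have "card {a. a<Suc r \<and> s a < ?p} \<le> card {..<j}"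
      by (intro card_mono) auto
    then have "card {a. a<Suc r \<and> s a < ?p} \<le> j" by simp
    ultimately show False using c1[of ?p] by auto
  qed
  show "t j \<le> s (Suc j)"
  proof (rule ccontr)
    assume "\<not> t j \<le> s (Suc j)"
    then have lt: "s (Suc j) < t j" by simp
    let ?p = "Suc (s (Suc j))"
    have "{..Suc j} \<subseteq> {a. a<Suc r \<and> s a < ?p}" using j by (auto simp: less_Suc_eq_le intro: sinc_le[OF s])
    then have "Suc (Suc j) \<le> card {a. a<Suc r \<and> s a < ?p}"
      using card_mono[of "{a. a<Suc r \<and> s a < ?p}" "{..Suc j}"] by auto
    moreover have "{b. b<r \<and> t b < ?p} \<subseteq> {..<j}"
    proof
      fix b assume b: "b \<in> {b. b<r \<and> t b < ?p}"
      show "b \<in> {..<j}"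
      proof (rule ccontr)
        assume "b \<notin> {..<j}"
        then have "t j \<le> t b" using b by (intro sinc_le[OF t]) auto
        then show False using b lt by auto
      qed
    qed
    then have "card {b. b<r \<and> t b < ?p} \<le> card {..<j}"
      by (intro card_mono) auto
    then have "card {b. b<r \<and> t b < ?p} \<le> j" by simp
    ultimately show False using c2[of ?p] by auto
  qed
qed

lemma inv_row:
  assumes s: "sinc (Suc r) s" and t: "sinc r t" and it: "interl r s t"
  shows "(\<Sum>a<Suc r. card {b. b<r \<and> s a < t b}) = (\<Sum>a<r. card {b. b<r \<and> t a < t b}) + card {a. a<r \<and> s a < t a}"
proof -
  have eq1: "{b. b<r \<and> s a < t b} = {b. a<b \<and> b<r} \<union> (if s a < t a then {a} else {})" if a: "a < r" for a
  proof (intro Set.set_eqI iffI)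
    fix b assume b: "b \<in> {b. b<r \<and> s a < t b}"
    show "b \<in> {b. a<b \<and> b<r} \<union> (if s a < t a then {a} else {})"
    proof (cases b a rule: linorder_cases)
      case less
      then have "t b \<le> s (Suc b)" using it b by (auto simp: interl_def)
      moreover have "s (Suc b) \<le> s a" using less a by (intro sinc_le[OF s]) auto
      ultimately show ?thesis using b by auto
    qed (use b in auto)
  next
    fix b assume b: "b \<in> {b. a<b \<and> b<r} \<union> (if s a < t a then {a} else {})"
    show "b \<in> {b. b<r \<and> s a < t b}"
    proof (cases "b = a")
      case False
      then have ab: "a < b" "b < r" using b by (auto split: if_splits)
      then have "s a < s b" by (intro sinc_less[OF s]) auto
      moreover have "s b \<le> t b" using it ab by (auto simp: interl_def)
      ultimately show ?thesis using ab by auto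
    qed (use b a in \<open>auto split: if_splits\<close>)
  qed
  have eq2: "{b. b<r \<and> t a < t b} = {b. a<b \<and> b<r}" if a: "a < r" for a
    using a by (auto simp: sinc_less_iff[OF t])
  have eq3: "{b. b<r \<and> s r < t b} = {}"
  proof -
    have "t b \<le> s r" if "b < r" for b
    proof -
      have "t b \<le> s (Suc b)" using it that by (auto simp: interl_def)
      also have "s (Suc b) \<le> s r" using that by (intro sinc_le[OF s]) auto
      finally show ?thesis .
    qed
    then show ?thesis using not_less by blast
  qed
  have "(\<Sum>a<Suc r. card {b. b<r \<and> s a < t b}) = (\<Sum>a<r. card {b. b<r \<and> s a < t b})"
    by (simp add: eq3)
  also have "\<dots> = (\<Sum>a<r. card {b. b<r \<and> t a < t b} + (if s a < t a then 1 else 0))"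
  proof (rule sum.cong[OF refl])
    fix a assume "a \<in> {..<r}"
    then have a: "a < r" by simp
    show "card {b. b<r \<and> s a < t b} = card {b. b<r \<and> t a < t b} + (if s a < t a then 1 else 0)"
    proof (cases "s a < t a")
      case True
      have "card ({b. a<b \<and> b<r} \<union> {a}) = Suc (card {b. a<b \<and> b<r})"
        by (subst card_Un_disjoint) auto
      then show ?thesis unfolding eq1[OF a] eq2[OF a] using True by simp
    next
      case False then show ?thesis unfolding eq1[OF a] eq2[OF a] by simp
    qed
  qed
  also have "\<dots> = (\<Sum>a<r. card {b. b<r \<and> t a < t b}) + card {a. a<r \<and> s a < t a}"
    by (simp add: sum.distrib sum.If_cases Int_def)
  finally show ?thesis .
qed

lemma tminus_s:
  assumes s: "sinc (Suc r) s" and t: "sinc r t" and it: "interl r s t"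
  shows "t ` {..<r} - s ` {..<Suc r} = t ` {a. a<r \<and> s a < t a \<and> t a < s (Suc a)}"
proof -
  have mem: "t a \<in> s ` {..<Suc r} \<longleftrightarrow> t a = s a \<or> t a = s (Suc a)" if a: "a < r" for a
  proof
    assume "t a \<in> s ` {..<Suc r}"
    then obtain c where c: "c < Suc r" "t a = s c" by auto
    have "s a \<le> s c" "s c \<le> s (Suc a)" using it a c by (auto simp: interl_def)
    have "a \<le> c"
    proof (rule ccontr)
      assume "\<not> a \<le> c" then have "s c < s a" using sinc_less[OF s, of c a] a c by auto
      then show False using \<open>s a \<le> s c\<close> by auto
    qed
    moreover have "c \<le> Suc a"
    proof (rule ccontr)
      assume "\<not> c \<le> Suc a" then have "s (Suc a) < s c" using sinc_less[OF s, of "Suc a" c] a c by auto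
      then show False using \<open>s c \<le> s (Suc a)\<close> by auto
    qed
    ultimately have "c = a \<or> c = Suc a" by auto
    then show "t a = s a \<or> t a = s (Suc a)" using c by auto
  next
    assume "t a = s a \<or> t a = s (Suc a)"
    then show "t a \<in> s ` {..<Suc r}" using a by auto
  qed
  show ?thesis
  proof (intro Set.set_eqI iffI)
    fix x assume "x \<in> t ` {..<r} - s ` {..<Suc r}"
    then obtain a where a: "a < r" "x = t a" "t a \<notin> s ` {..<Suc r}" by auto
    have "s a \<le> t a" "t a \<le> s (Suc a)" using it a(1) by (auto simp: interl_def)
    moreover have "t a \<noteq> s a" "t a \<noteq> s (Suc a)" using mem[OF a(1)] a(3) by auto
    ultimately show "x \<in> t ` {a. a<r \<and> s a < t a \<and> t a < s (Suc a)}"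
      using a(1,2) by auto
  next
    fix x assume "x \<in> t ` {a. a<r \<and> s a < t a \<and> t a < s (Suc a)}"
    then obtain a where a: "a < r" "x = t a" "s a < t a" "t a < s (Suc a)" by auto
    then show "x \<in> t ` {..<r} - s ` {..<Suc r}" using mem[OF a(1)] by auto
  qed
qed


definition nxt :: "(nat \<Rightarrow> int) \<Rightarrow> nat \<Rightarrow> int \<Rightarrow> bool" where
  "nxt v p w \<longleftrightarrow> (\<forall>p'. p \<le> p' \<and> v p' \<noteq> 0 \<and> (\<forall>j. p \<le> j \<and> j < p' \<longrightarrow> v j = 0) \<longrightarrow> v p' = w)"

lemma alt_prefix:
  fixes v :: "nat \<Rightarrow> int"
  assumes alt: "\<forall>j1 j2. v j1 \<noteq> 0 \<and> v j2 \<noteq> 0 \<and> j1 < j2 \<and> (\<forall>j. j1 < j \<and> j < j2 \<longrightarrow> v j = 0) \<longrightarrow> v j1 = - v j2"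
    and zero: "\<forall>j. j \<notin> {1..\<alpha>} \<longrightarrow> v j = 0"
    and tot: "(\<Sum>j\<in>{1..\<alpha>}. v j) = 1"
  shows "(\<Sum>j\<le>p. v j) \<in> {0,1}"
proof -
  define c where "c = v (LEAST j. v j \<noteq> 0)"
  have inv: "((\<Sum>j<p. v j) = 0 \<and> nxt v p c) \<or> ((\<Sum>j<p. v j) = c \<and> nxt v p (- c))" for p
  proof (induction p)
    case 0
    have "nxt v 0 c" unfolding nxt_def
    proof (intro allI impI)
      fix p' assume p': "0 \<le> p' \<and> v p' \<noteq> 0 \<and> (\<forall>j. 0 \<le> j \<and> j < p' \<longrightarrow> v j = 0)"
      have "(LEAST j. v j \<noteq> 0) = p'"
        by (rule Least_equality) (use p' in \<open>auto simp: not_less[symmetric]\<close>)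
      then show "v p' = c" by (simp add: c_def)
    qed
    then show ?case by simp
  next
    case (Suc p)
    show ?case
    proof (cases "v p = 0")
      case True
      have nx: "nxt v (Suc p) w" if "nxt v p w" for w
        unfolding nxt_def
      proof (intro allI impI)
        fix p' assume p': "Suc p \<le> p' \<and> v p' \<noteq> 0 \<and> (\<forall>j. Suc p \<le> j \<and> j < p' \<longrightarrow> v j = 0)"
        have z: "\<forall>j. p \<le> j \<and> j < p' \<longrightarrow> v j = 0"
        proof (intro allI impI)
          fix j assume j: "p \<le> j \<and> j < p'"
          show "v j = 0"
          proof (cases "j = p")
            case False then have "Suc p \<le> j" using j by auto
            then show ?thesis using p' j by auto
          qed (use True in auto)
        qed
        then have "p \<le> p' \<and> v p' \<noteq> 0 \<and> (\<forall>j. p \<le> j \<and> j < p' \<longrightarrow> v j = 0)"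
          using p' by auto
        then show "v p' = w" using that by (auto simp: nxt_def)
      qed
      show ?thesis using Suc.IH True nx by auto
    next
      case False
      have vp: "v p = w" if "nxt v p w" for w
        using that False unfolding nxt_def by auto
      have nx: "nxt v (Suc p) (- v p)" unfolding nxt_def
      proof (intro allI impI)
        fix p' assume p': "Suc p \<le> p' \<and> v p' \<noteq> 0 \<and> (\<forall>j. Suc p \<le> j \<and> j < p' \<longrightarrow> v j = 0)"
        then have "v p = - v p'" using alt False by (auto simp: Suc_le_eq)
        then show "v p' = - v p" by simp
      qed
      from Suc.IH show ?thesis
      proof
        assume a: "(\<Sum>j<p. v j) = 0 \<and> nxt v p c"
        then have "v p = c" using vp by auto
        then show ?thesis using a nx by auto
      next
        assume a: "(\<Sum>j<p. v j) = c \<and> nxt v p (- c)"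
        then have "v p = - c" using vp by auto
        then show ?thesis using a nx by auto
      qed
    qed
  qed
  have "(\<Sum>j<Suc \<alpha>. v j) = 1"
  proof -
    have "{..<Suc \<alpha>} = insert 0 {1..\<alpha>}" by auto
    then show ?thesis using zero tot by simp
  qed
  then have c1: "c = 1" using inv[of "Suc \<alpha>"] by auto
  show ?thesis using inv[of "Suc p"] c1 by (auto simp: lessThan_Suc_atMost)
qed

lemma conv_alt:
  fixes v :: "nat \<Rightarrow> int"
  assumes vals: "\<forall>j. v j \<in> {-1,0,1}" and pre: "\<forall>p. (\<Sum>j\<le>p. v j) \<in> {0,1}"
    and nz: "v j1 \<noteq> 0" "v j2 \<noteq> 0" and lt: "j1 < j2" and zs: "\<forall>j. j1 < j \<and> j < j2 \<longrightarrow> v j = 0"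
  shows "v j1 = - v j2"
proof -
  have stay: "(\<Sum>j\<le>k. v j) = (\<Sum>j\<le>j1. v j)" if "j1 \<le> k" "k < j2" for k
    using that
  proof (induction k rule: dec_induct)
    case base then show ?case by simp
  next
    case (step k) then show ?case using zs by simp
  qed
  have P2: "(\<Sum>j\<le>j2. v j) = (\<Sum>j\<le>j1. v j) + v j2"
  proof -
    obtain k where k: "j2 = Suc k" using lt by (cases j2) auto
    then have "(\<Sum>j\<le>j2. v j) = (\<Sum>j\<le>k. v j) + v j2" by simp
    also have "(\<Sum>j\<le>k. v j) = (\<Sum>j\<le>j1. v j)" using stay[of k] k lt by auto
    finally show ?thesis .
  qed
  have P1: "(\<Sum>j\<le>j1. v j) = (\<Sum>j<j1. v j) + v j1" by (simp add: lessThan_Suc_atMost[symmetric])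
  have P0: "(\<Sum>j<j1. v j) \<in> {0,1}"
  proof (cases j1)
    case 0 then show ?thesis by simp
  next
    case (Suc k) then show ?thesis using pre by (simp add: lessThan_Suc_atMost)
  qed
  have "v j1 \<in> {-1,1}" "v j2 \<in> {-1,1}" using vals nz by auto
  then show ?thesis using P0 P1 P2 pre[rule_format, of j1] pre[rule_format, of j2] by auto
qed


definition alt :: "nat \<Rightarrow> (nat \<Rightarrow> nat) \<Rightarrow> (nat \<Rightarrow> 'a::comm_ring_1) \<Rightarrow> 'a" where
  "alt n e z = det (mat n n (\<lambda>(i,j). z i ^ e j))"

lemma alt_step:
  fixes z :: "nat \<Rightarrow> 'a::comm_ring_1"
  assumes mono: "\<forall>j<n. e j \<le> e (Suc j)"
  shows "alt (Suc n) e z = (-1)^n * z n ^ e 0 *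
     det (mat n n (\<lambda>(i,j). z i ^ e (Suc j) - z n ^ (e (Suc j) - e j) * z i ^ e j))"
proof -
  define A where "A = (mat (Suc n) (Suc n) (\<lambda>(i,j). z i ^ e j) :: 'a mat)"
  define U where "U = (mat (Suc n) (Suc n) (\<lambda>(k,j). (if k = j then 1 else 0)
        - (if Suc k = j then z n ^ (e j - e k) else 0)) :: 'a mat)"
  have A: "A \<in> carrier_mat (Suc n) (Suc n)" and U: "U \<in> carrier_mat (Suc n) (Suc n)"
    by (auto simp: A_def U_def)
  have ut: "upper_triangular U" by (auto simp: upper_triangular_def U_def)
  have dU: "det U = 1"
    by (subst det_upper_triangular[OF ut U]) (simp add: prod_list_diag_prod U_def)
  have AU: "(A * U) $$ (i,j) = z i ^ e j - (if j = 0 then 0 else z n ^ (e j - e (j - 1)) * z i ^ e (j - 1))"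
    if "i < Suc n" "j < Suc n" for i j
  proof -
    have "(A * U) $$ (i,j) = (\<Sum>k\<in>{0..<Suc n}. z i ^ e k * ((if k = j then 1 else 0)
        - (if Suc k = j then z n ^ (e j - e k) else 0)))"
      using that A U by (simp add: scalar_prod_def A_def U_def)
    also have "\<dots> = (\<Sum>k\<in>{0..<Suc n}. (if k = j then z i ^ e k else 0))
        - (\<Sum>k\<in>{0..<Suc n}. (if Suc k = j then z i ^ e k * z n ^ (e j - e k) else 0))"
      unfolding sum_subtractf[symmetric] by (rule sum.cong) (auto simp: algebra_simps)
    also have "\<dots> = z i ^ e j - (if j = 0 then 0 else z n ^ (e j - e (j - 1)) * z i ^ e (j - 1))"
    proof -
      have "(\<Sum>k\<in>{0..<Suc n}. (if Suc k = j then z i ^ e k * z n ^ (e j - e k) else 0))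
          = (if j = 0 then 0 else z n ^ (e j - e (j - 1)) * z i ^ e (j - 1))"
      proof (cases j)
        case 0 then show ?thesis by simp
      next
        case (Suc j') then show ?thesis using that
          by (simp add: sum.delta[of _ j'] mult.commute cong: if_cong)
      qed
      then show ?thesis using that by simp
    qed
    finally show ?thesis .
  qed
  have rown: "(A * U) $$ (n, j) = (if j = 0 then z n ^ e 0 else 0)" if "j < Suc n" for j
  proof (cases j)
    case 0 then show ?thesis using AU[of n j] that by simp
  next
    case (Suc j')
    have "e j' \<le> e j" using mono Suc that by auto
    then have "z n ^ (e j - e j') * z n ^ e j' = z n ^ e j"
      by (simp add: power_add[symmetric])
    then show ?thesis using AU[of n j] that Suc by simp
  qed
  have AUc: "A * U \<in> carrier_mat (Suc n) (Suc n)" using A U by auto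
  have "alt (Suc n) e z = det (A * U)"
    using det_mult[OF A U] dU by (simp add: alt_def A_def)
  also have "\<dots> = (\<Sum>j<Suc n. (A * U) $$ (n,j) * cofactor (A * U) n j)"
    by (rule laplace_expansion_row[OF AUc]) simp
  also have "\<dots> = (\<Sum>j<Suc n. if j = 0 then z n ^ e 0 * cofactor (A * U) n 0 else 0)"
    by (rule sum.cong) (auto simp: rown)
  also have "\<dots> = z n ^ e 0 * cofactor (A * U) n 0" by (simp add: sum.delta)
  moreover have "mat_delete (A * U) n 0 = mat n n (\<lambda>(i,j). z i ^ e (Suc j) - z n ^ (e (Suc j) - e j) * z i ^ e j)"
  proof -
    have d: "dim_row A = Suc n" "dim_col U = Suc n" using A U by auto
    show ?thesis by (rule eq_matI) (auto simp: mat_delete_def d AU simp del: index_mult_mat(1))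
  qed
  ultimately show ?thesis by (simp add: cofactor_def)
qed

lemma det_scale_rows:
  fixes c :: "nat \<Rightarrow> 'a::comm_ring_1"
  shows "det (mat n n (\<lambda>(i,j). c i * f i j)) = (\<Prod>i<n. c i) * det (mat n n (\<lambda>(i,j). f i j))"
proof -
  have A: "mat n n (\<lambda>(i,j). c i * f i j) \<in> carrier_mat n n" "mat n n (\<lambda>(i,j). f i j) \<in> carrier_mat n n"
    by auto
  show ?thesis unfolding det_def'[OF A(1)] det_def'[OF A(2)] sum_distrib_left
  proof (rule sum.cong[OF refl])
    fix p assume p: "p \<in> {p. p permutes {0..<n}}"
    have "(\<Prod>i = 0..<n. mat n n (\<lambda>(i,j). c i * f i j) $$ (i, p i)) =
       (\<Prod>i = 0..<n. c i * (mat n n (\<lambda>(i,j). f i j) $$ (i, p i)))"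
      by (rule prod.cong, insert p, auto simp: permutes_def)
    also have "\<dots> = (\<Prod>i<n. c i) * (\<Prod>i = 0..<n. mat n n (\<lambda>(i,j). f i j) $$ (i, p i))"
      by (simp add: prod.distrib atLeast0LessThan)
    finally show "signof p * (\<Prod>i = 0..<n. mat n n (\<lambda>(i,j). c i * f i j) $$ (i, p i)) =
      (\<Prod>i<n. c i) * (signof p * (\<Prod>i = 0..<n. mat n n (\<lambda>(i,j). f i j) $$ (i, p i)))"
      by (simp add: algebra_simps)
  qed
qed

lemma prod_neg_swap:
  fixes z :: "nat \<Rightarrow> 'a::comm_ring_1"
  shows "(-1)^n * (\<Prod>i<n. z i - w) = (\<Prod>i<n. w - z i)"
  by (induction n) (simp_all add: algebra_simps)

lemma alt_vander_step:
  fixes z :: "nat \<Rightarrow> 'a::comm_ring_1"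
  shows "alt (Suc n) (\<lambda>j. j) z = (\<Prod>k<n. z n - z k) * alt n (\<lambda>j. j) z"
proof -
  have "alt (Suc n) (\<lambda>j. j) z = (-1)^n * det (mat n n (\<lambda>(i,j). (z i - z n) * z i ^ j))"
    by (subst alt_step) (simp_all add: algebra_simps)
  also have "\<dots> = (-1)^n * ((\<Prod>i<n. z i - z n) * alt n (\<lambda>j. j) z)"
    by (subst det_scale_rows) (simp add: alt_def)
  finally show ?thesis by (simp add: prod_neg_swap mult.assoc[symmetric])
qed

lemma alt_vander_nonzero:
  fixes z :: "nat \<Rightarrow> 'a::idom"
  assumes "inj_on z {0..<n}"
  shows "alt n (\<lambda>j. j) z \<noteq> 0"
  using assms
proof (induction n)
  case 0 then show ?case by (simp add: alt_def)
next
  case (Suc n)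
  have "inj_on z {0..<n}" using Suc.prems by (rule inj_on_subset) auto
  then have "alt n (\<lambda>j. j) z \<noteq> 0" by (rule Suc.IH)
  moreover have "(\<Prod>k<n. z n - z k) \<noteq> 0"
  proof -
    have "z n - z k \<noteq> 0" if "k < n" for k
      using inj_onD[OF Suc.prems, of n k] that by auto
    then show ?thesis by (simp add: prod_zero_iff)
  qed
  ultimately show ?case by (simp add: alt_vander_step)
qed

lemma telesc:
  fixes z y :: "'a::comm_ring_1"
  assumes "1 \<le> d"
  shows "(z - y) * (\<Sum>i\<in>{1..<d}. z^(d-i) * y^(a+i)) = z^d * y^(Suc a) - z * y^(a+d)"
  using assms
proof (induction d rule: dec_induct)
  case base then show ?case by simp
next
  case (step d)
  have "(\<Sum>i\<in>{1..<Suc d}. z^(Suc d-i) * y^(a+i)) = z * (\<Sum>i\<in>{1..<d}. z^(d-i) * y^(a+i)) + z * y^(a+d)"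
  proof -
    have "(\<Sum>i\<in>{1..<Suc d}. z^(Suc d-i) * y^(a+i)) = (\<Sum>i\<in>{1..<d}. z^(Suc d-i) * y^(a+i)) + z^(Suc d - d) * y^(a+d)"
      using step.hyps by (simp add: sum.atLeastLessThan_Suc)
    also have "(\<Sum>i\<in>{1..<d}. z^(Suc d-i) * y^(a+i)) = z * (\<Sum>i\<in>{1..<d}. z^(d-i) * y^(a+i))"
      unfolding sum_distrib_left by (rule sum.cong) (auto simp: Suc_diff_le)
    finally show ?thesis by simp
  qed
  then have "(z - y) * (\<Sum>i\<in>{1..<Suc d}. z^(Suc d-i) * y^(a+i)) =
     z * ((z - y) * (\<Sum>i\<in>{1..<d}. z^(d-i) * y^(a+i))) + (z - y) * z * y^(a+d)"
    by (simp add: algebra_simps)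
  also have "\<dots> = z * (z^d * y^(Suc a) - z * y^(a+d)) + (z - y) * z * y^(a+d)"
    by (simp only: step.IH)
  also have "\<dots> = z^(Suc d) * y^(Suc a) - z * y^(a + Suc d)"
    by (simp add: algebra_simps)
  finally show ?case .
qed

definition wgt :: "'a::comm_ring_1 \<Rightarrow> nat \<Rightarrow> nat \<Rightarrow> nat \<Rightarrow> 'a" where
  "wgt q a b t = (if t = a then 1 else if t = b then - q else 1 - q)"

lemma entry_identity:
  fixes z y q :: "'a::comm_ring_1"
  assumes "a < b"
  shows "(z - y) * (\<Sum>s\<in>{a..b}. wgt q a b s * z^(b-s) * y^s) = (z - q*y) * (z^(b-a) * y^a - y^b)"
proof -
  define d where "d = b - a"
  have d1: "1 \<le> d" and b: "b = a + d" using assms by (auto simp: d_def)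
  have split: "{a..b} = {a} \<union> (\<lambda>i. a + i) ` {1..<d} \<union> {b}" unfolding b
    by (auto simp: image_iff)
  have "(\<Sum>s\<in>{a..b}. wgt q a b s * z^(b-s) * y^s) =
      z^d * y^a + (1 - q) * (\<Sum>i\<in>{1..<d}. z^(d-i) * y^(a+i)) - q * y^b"
  proof -
    have disj: "{a} \<inter> (\<lambda>i. a + i) ` {1..<d} = {}" "({a} \<union> (\<lambda>i. a + i) ` {1..<d}) \<inter> {b} = {}"
      using d1 unfolding b by auto
    have "(\<Sum>s\<in>{a..b}. wgt q a b s * z^(b-s) * y^s) = wgt q a b a * z^(b-a) * y^a
       + (\<Sum>s\<in>(\<lambda>i. a + i) ` {1..<d}. wgt q a b s * z^(b-s) * y^s) + wgt q a b b * z^(b-b) * y^b"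
      unfolding split by (subst sum.union_disjoint, use disj in auto)+
    also have "(\<Sum>s\<in>(\<lambda>i. a + i) ` {1..<d}. wgt q a b s * z^(b-s) * y^s) = (1 - q) * (\<Sum>i\<in>{1..<d}. z^(d-i) * y^(a+i))"
      unfolding sum_distrib_left by (subst sum.reindex) (auto simp: inj_on_def wgt_def b intro!: sum.cong)
    finally show ?thesis using assms by (simp add: wgt_def d_def)
  qed
  also have "(z - y) * \<dots> = (z - y) * z^d * y^a + (1 - q) * ((z - y) * (\<Sum>i\<in>{1..<d}. z^(d-i) * y^(a+i))) - (z - y) * q * y^b"
    by (simp add: algebra_simps)
  also have "\<dots> = (z - y) * z^d * y^a + (1 - q) * (z^d * y^(Suc a) - z * y^(a+d)) - (z - y) * q * y^b"
    by (simp only: telesc[OF d1, of z y a])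
  also have "\<dots> = (z - q*y) * (z^(b-a) * y^a - y^b)"
    unfolding b by (simp add: algebra_simps power_add)
  finally show ?thesis .
qed

lemma multilin:
  fixes z :: "nat \<Rightarrow> 'a::comm_ring_1" and c :: "nat \<Rightarrow> nat \<Rightarrow> 'a"
  assumes fin: "\<And>j. finite (B j)"
  shows "(\<Sum>t\<in>PiE {0..<n} B. (\<Prod>j\<in>{0..<n}. c j (t j)) * det (mat n n (\<lambda>(i,j). z i ^ t j)))
     = det (mat n n (\<lambda>(i,j). \<Sum>s\<in>B j. c j s * z i ^ s))"
proof -
  have C1: "mat n n (\<lambda>(i,j). z i ^ t j) \<in> carrier_mat n n" for t by simp
  have C2: "mat n n (\<lambda>(i,j). \<Sum>s\<in>B j. c j s * z i ^ s) \<in> carrier_mat n n" by simp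
  let ?P = "{p. p permutes {0..<n}}"
  have pin: "p i < n" if "p \<in> ?P" "i < n" for p i
    using that permutes_in_image[of p "{0..<n}" i] by auto
  have "(\<Sum>t\<in>PiE {0..<n} B. (\<Prod>j\<in>{0..<n}. c j (t j)) * det (mat n n (\<lambda>(i,j). z i ^ t j)))
      = (\<Sum>t\<in>PiE {0..<n} B. \<Sum>p\<in>?P. signof p * ((\<Prod>j\<in>{0..<n}. c j (t j)) * (\<Prod>i\<in>{0..<n}. z i ^ t (p i))))"
  proof (rule sum.cong[OF refl])
    fix t
    have "(\<Prod>i = 0..<n. mat n n (\<lambda>(i,j). z i ^ t j) $$ (i, p i)) = (\<Prod>i\<in>{0..<n}. z i ^ t (p i))"
      if "p \<in> ?P" for p
      by (rule prod.cong) (auto simp: pin[OF that])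
    then show "(\<Prod>j\<in>{0..<n}. c j (t j)) * det (mat n n (\<lambda>(i,j). z i ^ t j)) =
      (\<Sum>p\<in>?P. signof p * ((\<Prod>j\<in>{0..<n}. c j (t j)) * (\<Prod>i\<in>{0..<n}. z i ^ t (p i))))"
      unfolding det_def'[OF C1] sum_distrib_left by (intro sum.cong) (auto simp: algebra_simps)
  qed
  also have "\<dots> = (\<Sum>p\<in>?P. signof p * (\<Sum>t\<in>PiE {0..<n} B. \<Prod>j\<in>{0..<n}. c j (t j) * z (inv_into UNIV p j) ^ t j))"
  proof -
    have "(\<Prod>i\<in>{0..<n}. z i ^ t (p i)) = (\<Prod>j\<in>{0..<n}. z (inv_into UNIV p j) ^ t j)" if "p \<in> ?P" for p t
    proof -
      have "(\<Prod>j\<in>{0..<n}. z (inv_into UNIV p j) ^ t j) = (\<Prod>i\<in>{0..<n}. z (inv_into UNIV p (p i)) ^ t (p i))"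
        using prod.permute[of p "{0..<n}" "\<lambda>j. z (inv_into UNIV p j) ^ t j"] that by (simp add: comp_def)
      also have "\<dots> = (\<Prod>i\<in>{0..<n}. z i ^ t (p i))"
        using that by (simp add: permutes_inverses(2))
      finally show ?thesis by simp
    qed
    then show ?thesis
      by (subst sum.swap) (auto simp: sum_distrib_left prod.distrib intro!: sum.cong)
  qed
  also have "\<dots> = (\<Sum>p\<in>?P. signof p * (\<Prod>j\<in>{0..<n}. \<Sum>s\<in>B j. c j s * z (inv_into UNIV p j) ^ s))"
    by (subst prod_sum_PiE) (auto simp: fin)
  also have "\<dots> = (\<Sum>p\<in>?P. signof p * (\<Prod>i\<in>{0..<n}. \<Sum>s\<in>B (p i). c (p i) s * z i ^ s))"
  proof (rule sum.cong[OF refl])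
    fix p assume p: "p \<in> ?P"
    have "(\<Prod>j\<in>{0..<n}. \<Sum>s\<in>B j. c j s * z (inv_into UNIV p j) ^ s) = (\<Prod>i\<in>{0..<n}. \<Sum>s\<in>B (p i). c (p i) s * z (inv_into UNIV p (p i)) ^ s)"
      using prod.permute[of p "{0..<n}" "\<lambda>j. \<Sum>s\<in>B j. c j s * z (inv_into UNIV p j) ^ s"] p by (simp add: comp_def)
    also have "\<dots> = (\<Prod>i\<in>{0..<n}. \<Sum>s\<in>B (p i). c (p i) s * z i ^ s)"
      using p by (simp add: permutes_inverses(2))
    finally show "signof p * (\<Prod>j\<in>{0..<n}. \<Sum>s\<in>B j. c j s * z (inv_into UNIV p j) ^ s) = signof p * (\<Prod>i\<in>{0..<n}. \<Sum>s\<in>B (p i). c (p i) s * z i ^ s)"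
      by simp
  qed
  also have "\<dots> = det (mat n n (\<lambda>(i,j). \<Sum>s\<in>B j. c j s * z i ^ s))"
    unfolding det_def'[OF C2]
    by (intro sum.cong refl arg_cong2[where f="(*)"] prod.cong) (auto simp: pin)
  finally show ?thesis .
qed

definition SB :: "(nat \<Rightarrow> nat) \<Rightarrow> nat \<Rightarrow> (nat \<Rightarrow> nat) set" where
  "SB e n = {t \<in> PiE {0..<n} (\<lambda>j. {e j..e (Suc j)}). \<forall>j. Suc j < n \<longrightarrow> t j < t (Suc j)}"

definition stepw :: "'a::comm_ring_1 \<Rightarrow> (nat \<Rightarrow> 'a) \<Rightarrow> nat \<Rightarrow> (nat \<Rightarrow> nat) \<Rightarrow> (nat \<Rightarrow> nat) \<Rightarrow> 'a" where
  "stepw q z n e t = (\<Prod>j<n. wgt q (e j) (e (Suc j)) (t j)) * z n ^ ((\<Sum>j<Suc n. e j) - (\<Sum>j<n. t j))"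

lemma finite_SB: "finite (SB e n)"
  unfolding SB_def by (rule finite_subset[of _ "PiE {0..<n} (\<lambda>j. {e j..e (Suc j)})"]) (auto intro: finite_PiE)

lemma main_step:
  fixes z :: "nat \<Rightarrow> 'a::comm_ring_1"
  assumes strict: "\<forall>j<n. e j < e (Suc j)"
  shows "(\<Prod>k<n. z n - z k) * (\<Sum>t\<in>SB e n. stepw q z n e t * alt n t z) = (\<Prod>k<n. z n - q * z k) * alt (Suc n) e z"
proof -
  define Box where "Box = PiE {0..<n} (\<lambda>j. {e j..e (Suc j)})"
  define c where "c = (\<lambda>j s. wgt q (e j) (e (Suc j)) s * z n ^ (e (Suc j) - s))"
  have finB: "finite Box" unfolding Box_def by (auto intro: finite_PiE)
  have "(\<Sum>t\<in>SB e n. stepw q z n e t * alt n t z) = (\<Sum>t\<in>Box. stepw q z n e t * alt n t z)"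
  proof (rule sum.mono_neutral_left[OF finB])
    show "SB e n \<subseteq> Box" unfolding SB_def Box_def by auto
    show "\<forall>t\<in>Box - SB e n. stepw q z n e t * alt n t z = 0"
    proof
      fix t assume t: "t \<in> Box - SB e n"
      then obtain j where j: "Suc j < n" "\<not> t j < t (Suc j)" unfolding SB_def Box_def by auto
      have "t j \<le> e (Suc j)" "e (Suc j) \<le> t (Suc j)" using t j unfolding Box_def by (auto simp: PiE_iff)
      then have eq: "t j = t (Suc j)" using j by auto
      have "alt n t z = 0" unfolding alt_def
        by (rule det_identical_columns[of _ n j "Suc j"]) (use j eq in \<open>auto simp: col_def\<close>)
      then show "stepw q z n e t * alt n t z = 0" by simp
    qed
  qed
  also have "\<dots> = (\<Sum>t\<in>Box. z n ^ e 0 * ((\<Prod>j\<in>{0..<n}. c j (t j)) * det (mat n n (\<lambda>(i,j). z i ^ t j))))"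
  proof (rule sum.cong[OF refl])
    fix t assume t: "t \<in> Box"
    have le: "t j \<le> e (Suc j)" if "j \<in> {..<n}" for j using t that unfolding Box_def by (auto simp: PiE_iff)
    have "(\<Sum>j<Suc n. e j) - (\<Sum>j<n. t j) = e 0 + (\<Sum>j<n. e (Suc j) - t j)"
    proof -
      have "(\<Sum>j<n. t j) \<le> (\<Sum>j<n. e (Suc j))" by (rule sum_mono) (use le in auto)
      moreover have "(\<Sum>j<Suc n. e j) = e 0 + (\<Sum>j<n. e (Suc j))" by (rule sum.lessThan_Suc_shift)
      moreover have "(\<Sum>j<n. e (Suc j) - t j) = (\<Sum>j<n. e (Suc j)) - (\<Sum>j<n. t j)"
        using sum_subtractf_nat[of "{..<n}" t "\<lambda>j. e (Suc j)"] le by auto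
      ultimately show ?thesis by simp
    qed
    then have "stepw q z n e t = z n ^ e 0 * (\<Prod>j<n. c j (t j))"
      by (simp add: stepw_def c_def power_add power_sum prod.distrib algebra_simps)
    then show "stepw q z n e t * alt n t z = z n ^ e 0 * ((\<Prod>j\<in>{0..<n}. c j (t j)) * det (mat n n (\<lambda>(i,j). z i ^ t j)))"
      by (simp add: alt_def atLeast0LessThan)
  qed
  also have "\<dots> = z n ^ e 0 * det (mat n n (\<lambda>(i,j). \<Sum>s\<in>{e j..e (Suc j)}. c j s * z i ^ s))"
    unfolding sum_distrib_left[symmetric] Box_def by (subst multilin) auto
  finally have L: "(\<Sum>t\<in>SB e n. stepw q z n e t * alt n t z) = z n ^ e 0 * det (mat n n (\<lambda>(i,j). \<Sum>s\<in>{e j..e (Suc j)}. c j s * z i ^ s))" .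
  have "(\<Prod>k<n. z n - z k) * det (mat n n (\<lambda>(i,j). \<Sum>s\<in>{e j..e (Suc j)}. c j s * z i ^ s))
      = det (mat n n (\<lambda>(i,j). (z n - z i) * (\<Sum>s\<in>{e j..e (Suc j)}. c j s * z i ^ s)))"
    by (simp add: det_scale_rows)
  also have "\<dots> = det (mat n n (\<lambda>(i,j). (z n - q * z i) * (- 1 * (z i ^ e (Suc j) - z n ^ (e (Suc j) - e j) * z i ^ e j))))"
  proof -
    have "(z n - z i) * (\<Sum>s\<in>{e j..e (Suc j)}. c j s * z i ^ s) = (z n - q * z i) * (- 1 * (z i ^ e (Suc j) - z n ^ (e (Suc j) - e j) * z i ^ e j))"
      if "j < n" for i j
      using entry_identity[of "e j" "e (Suc j)" "z n" "z i" q] strict that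
      by (simp add: c_def algebra_simps)
    then show ?thesis by (intro arg_cong[where f=det] eq_matI) auto
  qed
  also have "\<dots> = (\<Prod>k<n. z n - q * z k) * ((\<Prod>k<n. - 1) * det (mat n n (\<lambda>(i,j). z i ^ e (Suc j) - z n ^ (e (Suc j) - e j) * z i ^ e j)))"
    by (simp only: det_scale_rows)
  finally have R: "(\<Prod>k<n. z n - z k) * det (mat n n (\<lambda>(i,j). \<Sum>s\<in>{e j..e (Suc j)}. c j s * z i ^ s)) =
     (\<Prod>k<n. z n - q * z k) * ((-1)^n * det (mat n n (\<lambda>(i,j). z i ^ e (Suc j) - z n ^ (e (Suc j) - e j) * z i ^ e j)))"
    by simp
  have A: "alt (Suc n) e z = (-1)^n * z n ^ e 0 * det (mat n n (\<lambda>(i,j). z i ^ e (Suc j) - z n ^ (e (Suc j) - e j) * z i ^ e j))"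
    by (rule alt_step) (use strict in auto)
  show ?thesis unfolding L A
    using R by (simp add: algebra_simps)
qed


fun G :: "'a::comm_ring_1 \<Rightarrow> (nat \<Rightarrow> 'a) \<Rightarrow> nat \<Rightarrow> (nat \<Rightarrow> nat) \<Rightarrow> 'a" where
  "G q z 0 e = 1"
| "G q z (Suc n) e = (\<Sum>t\<in>SB e n. stepw q z n e t * G q z n t)"

definition Pq :: "'a::comm_ring_1 \<Rightarrow> (nat \<Rightarrow> 'a) \<Rightarrow> nat \<Rightarrow> 'a" where
  "Pq q z n = (\<Prod>l<n. \<Prod>k<l. z l - q * z k)"

lemma G_alt:
  fixes z :: "nat \<Rightarrow> 'a::comm_ring_1"
  assumes "\<forall>j. Suc j < n \<longrightarrow> e j < e (Suc j)"
  shows "G q z n e * alt n (\<lambda>j. j) z = Pq q z n * alt n e z"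
  using assms
proof (induction n arbitrary: e)
  case 0 then show ?case by (simp add: Pq_def alt_def)
next
  case (Suc n)
  have IH: "G q z n t * alt n (\<lambda>j. j) z = Pq q z n * alt n t z" if "t \<in> SB e n" for t
    using that by (intro Suc.IH) (auto simp: SB_def)
  have "G q z (Suc n) e * alt (Suc n) (\<lambda>j. j) z
      = (\<Sum>t\<in>SB e n. stepw q z n e t * G q z n t) * ((\<Prod>k<n. z n - z k) * alt n (\<lambda>j. j) z)"
    by (simp add: alt_vander_step)
  also have "\<dots> = (\<Sum>t\<in>SB e n. stepw q z n e t * (G q z n t * alt n (\<lambda>j. j) z)) * (\<Prod>k<n. z n - z k)"
    by (simp add: sum_distrib_left sum_distrib_right mult_ac)
  also have "\<dots> = (\<Sum>t\<in>SB e n. stepw q z n e t * (Pq q z n * alt n t z)) * (\<Prod>k<n. z n - z k)"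
    by (simp add: IH cong: sum.cong)
  also have "\<dots> = Pq q z n * ((\<Prod>k<n. z n - z k) * (\<Sum>t\<in>SB e n. stepw q z n e t * alt n t z))"
    by (simp add: sum_distrib_left sum_distrib_right algebra_simps)
  also have "\<dots> = Pq q z n * ((\<Prod>k<n. z n - q * z k) * alt (Suc n) e z)"
    using Suc.prems by (subst main_step) auto
  also have "\<dots> = Pq q z (Suc n) * alt (Suc n) e z"
    by (simp add: Pq_def)
  finally show ?case .
qed

lemma poly_wgt: "poly (wgt [:q:] a b t) x = wgt q a b t"
  by (simp add: wgt_def)

lemma poly_G:
  fixes q :: "'a::comm_ring_1"
  shows "poly (G [:q:] Z n e) 0 = G q (\<lambda>i. poly (Z i) 0) n e"
proof (induction n arbitrary: e)
  case 0 then show ?case by simp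
next
  case (Suc n) then show ?case
    by (simp add: poly_sum poly_prod stepw_def poly_wgt)
qed

lemma G_id:
  fixes q :: "'a::idom" and z :: "nat \<Rightarrow> 'a"
  shows "G q z n (\<lambda>j. j) = Pq q z n"
proof -
  define Z where "Z = (\<lambda>i. [:z i:] + monom 1 (Suc i))"
  have inj: "inj_on Z {0..<n}"
  proof (rule inj_onI)
    fix i j assume "Z i = Z j"
    then have "coeff (Z i) (Suc i) = coeff (Z j) (Suc i)" by simp
    then show "i = j" by (auto simp: Z_def coeff_monom split: if_splits)
  qed
  have "G [:q:] Z n (\<lambda>j. j) * alt n (\<lambda>j. j) Z = Pq [:q:] Z n * alt n (\<lambda>j. j) Z"
    by (rule G_alt) auto
  then have "G [:q:] Z n (\<lambda>j. j) = Pq [:q:] Z n"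
    using alt_vander_nonzero[OF inj] by simp
  then have "poly (G [:q:] Z n (\<lambda>j. j)) 0 = poly (Pq [:q:] Z n) 0" by simp
  moreover have Zz: "poly (Z i) 0 = z i" for i by (auto simp: Z_def poly_monom)
  ultimately show ?thesis by (simp add: poly_G Pq_def poly_prod Zz)
qed


definition MT :: "nat \<Rightarrow> (nat \<Rightarrow> nat) \<Rightarrow> (nat \<Rightarrow> nat \<Rightarrow> nat) set" where
  "MT n e = {tri. tri n = e \<and> (\<forall>r<n. tri r \<in> SB (tri (Suc r)) r) \<and> (\<forall>r>n. tri r = undefined)}"

lemma SB_cong: "(\<forall>j\<le>n. e j = e' j) \<Longrightarrow> SB e n = SB e' n"
  unfolding SB_def by (intro Collect_cong) (auto simp: PiE_iff)

lemma G_cong: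
  assumes "\<forall>j<n. e j = e' j" shows "G q z n e = G q z n e'"
proof (cases n)
  case 0 then show ?thesis by simp
next
  case (Suc m)
  have sb: "SB e m = SB e' m" using assms Suc by (intro SB_cong) auto
  have "stepw q z m e t = stepw q z m e' t" for t
    unfolding stepw_def using assms Suc by (auto intro!: prod.cong sum.cong arg_cong2[where f="(-)"] arg_cong2[where f="(*)"] arg_cong2[where f="(^)"])
  then show ?thesis using Suc sb by simp
qed

lemma finite_MT: "finite (MT n e)"
proof (induction n arbitrary: e)
  case 0
  have "MT 0 e \<subseteq> {\<lambda>r. if r = 0 then e else undefined}" by (auto simp: MT_def)
  then show ?case by (rule finite_subset) auto
next
  case (Suc n)
  have "MT (Suc n) e \<subseteq> (\<lambda>(t,tri). tri(Suc n := e)) ` (SIGMA t:SB e n. MT n t)"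
  proof
    fix tri assume tri: "tri \<in> MT (Suc n) e"
    have "(tri n, tri(Suc n := undefined)) \<in> (SIGMA t:SB e n. MT n t)"
      using tri by (auto simp: MT_def)
    moreover have "tri = tri(Suc n := e)" using tri by (auto simp: MT_def)
    ultimately show "tri \<in> (\<lambda>(t,tri). tri(Suc n := e)) ` (SIGMA t:SB e n. MT n t)"
      by (auto intro!: image_eqI[of _ _ "(tri n, tri(Suc n := undefined))"])
  qed
  moreover have "finite (SIGMA t:SB e n. MT n t)" using Suc finite_SB by auto
  ultimately show ?case by (rule finite_subset[OF _ finite_imageI])
qed

lemma G_MT: "G q z n e = (\<Sum>tri\<in>MT n e. \<Prod>r<n. stepw q z r (tri (Suc r)) (tri r))"
proof (induction n arbitrary: e)
  case 0
  have "MT 0 e = {\<lambda>r. if r = 0 then e else undefined}" by (auto simp: MT_def)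
  then show ?case by simp
next
  case (Suc n)
  have pr: "(\<Prod>r<n. stepw q z r ((a(Suc n := x)) (Suc r)) ((a(Suc n := x)) r))
        = (\<Prod>r<n. stepw q z r (a (Suc r)) (a r))" for a x
    by (rule prod.cong) auto
  have "(\<Sum>tri\<in>MT (Suc n) e. \<Prod>r<Suc n. stepw q z r (tri (Suc r)) (tri r))
      = (\<Sum>(t,tri)\<in>(SIGMA t:SB e n. MT n t). stepw q z n e t * (\<Prod>r<n. stepw q z r (tri (Suc r)) (tri r)))"
    apply (rule sum.reindex_bij_witness[where i="\<lambda>(t,tri). tri(Suc n := e)" and j="\<lambda>tri. (tri n, tri(Suc n := undefined))"])
    apply (auto simp: MT_def pr)
    done
  also have "\<dots> = (\<Sum>t\<in>SB e n. stepw q z n e t * (\<Sum>tri\<in>MT n t. \<Prod>r<n. stepw q z r (tri (Suc r)) (tri r)))"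
    by (subst sum.Sigma[symmetric]) (auto simp: finite_SB finite_MT sum_distrib_left)
  also have "\<dots> = G q z (Suc n) e" by (simp add: Suc.IH)
  finally show ?case by simp
qed

definition e0 :: "nat \<Rightarrow> nat \<Rightarrow> nat" where
  "e0 \<alpha> = restrict (\<lambda>j. j) {0..<\<alpha>}"

definition mat_of :: "nat \<Rightarrow> (nat \<Rightarrow> nat \<Rightarrow> nat) \<Rightarrow> nat \<Rightarrow> nat \<Rightarrow> int" where
  "mat_of \<alpha> tri i j = (if 1 \<le> i \<and> i \<le> \<alpha> \<and> 1 \<le> j \<and> j \<le> \<alpha> then
      of_bool (j - 1 \<in> tri i ` {..<i}) - of_bool (j - 1 \<in> tri (i - 1) ` {..<i - 1}) else 0)"

lemma sumV:
  fixes V :: "nat set" and \<alpha> p :: nat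
  assumes "V \<subseteq> {..<\<alpha>}"
  shows "(\<Sum>j\<le>p. (if 1 \<le> j \<and> j \<le> \<alpha> then of_bool (j - 1 \<in> V) else 0)) = int (card (V \<inter> {..<p}))"
proof (induction p)
  case 0 then show ?case by simp
next
  case (Suc p)
  have fin: "finite V" using assms finite_subset by blast
  have "V \<inter> {..<Suc p} = (V \<inter> {..<p}) \<union> (if p \<in> V then {p} else {})" by (auto simp: less_Suc_eq)
  then have c: "card (V \<inter> {..<Suc p}) = card (V \<inter> {..<p}) + (if p \<in> V then 1 else 0)"
    using fin by (auto simp: card_insert_if)
  have "p \<in> V \<Longrightarrow> Suc p \<le> \<alpha>" using assms by auto
  then show ?case using Suc c by auto
qed

lemma card_image_cut:
  assumes "inj_on f {..<n}"
  shows "card (f ` {..<n} \<inter> {..<p}) = card {a. a < n \<and> f a < p}"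
proof -
  have "f ` {..<n} \<inter> {..<p} = f ` {a. a < n \<and> f a < p}" by auto
  moreover have "inj_on f {a. a < n \<and> f a < p}" by (rule inj_on_subset[OF assms]) auto
  ultimately show ?thesis by (simp add: card_image)
qed

lemma sumW:
  fixes V :: "nat set" and \<alpha> :: nat
  assumes "V \<subseteq> {..<\<alpha>}"
  shows "(\<Sum>j\<in>{1..\<alpha>}. of_bool (j - 1 \<in> V) * F j) = (\<Sum>c\<in>V. F (Suc c) :: 'a::comm_ring_1)"
proof -
  have "(\<Sum>j\<in>{1..\<alpha>}. of_bool (j - 1 \<in> V) * F j) = (\<Sum>j\<in>Suc ` {..<\<alpha>}. of_bool (j - 1 \<in> V) * F j)"
    by (simp only: image_Suc_lessThan)
  also have "\<dots> = (\<Sum>c\<in>{..<\<alpha>}. of_bool (c \<in> V) * F (Suc c))"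
    by (subst sum.reindex) auto
  also have "\<dots> = (\<Sum>c\<in>{..<\<alpha>}. if c \<in> V then F (Suc c) else 0)"
    by (intro sum.cong) auto
  also have "\<dots> = (\<Sum>c\<in>{..<\<alpha>} \<inter> V. F (Suc c))"
    by (simp add: sum.inter_restrict)
  also have "{..<\<alpha>} \<inter> V = V" using assms by auto
  finally show ?thesis .
qed

context
  fixes \<alpha> :: nat and tri :: "nat \<Rightarrow> nat \<Rightarrow> nat"
  assumes tri: "tri \<in> MT \<alpha> (e0 \<alpha>)"
begin

lemma MT_top: "tri \<alpha> = e0 \<alpha>" using tri by (simp add: MT_def)
lemma MT_SB: "r < \<alpha> \<Longrightarrow> tri r \<in> SB (tri (Suc r)) r" using tri by (simp add: MT_def)
lemma MT_above: "\<alpha> < r \<Longrightarrow> tri r = undefined" using tri by (simp add: MT_def)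

lemma MT_sinc: "r \<le> \<alpha> \<Longrightarrow> sinc r (tri r)"
proof (cases "r = \<alpha>")
  case True then show ?thesis using MT_top by (auto simp: sinc_def e0_def)
next
  case False
  assume "r \<le> \<alpha>" then have "r < \<alpha>" using False by simp
  then show ?thesis using MT_SB[of r] by (auto simp: sinc_def SB_def)
qed

lemma MT_interl: "r < \<alpha> \<Longrightarrow> interl r (tri (Suc r)) (tri r)"
  using MT_SB[of r] by (auto simp: interl_def SB_def PiE_iff)

lemma MT_ext: "r \<le> \<alpha> \<Longrightarrow> r \<le> j \<Longrightarrow> tri r j = undefined"
proof (cases "r = \<alpha>")
  case True then show "r \<le> j \<Longrightarrow> ?thesis" using MT_top by (auto simp: e0_def)
next
  case False
  assume "r \<le> \<alpha>" "r \<le> j" then have "r < \<alpha>" using False by simp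
  then show ?thesis using MT_SB[of r] \<open>r \<le> j\<close> by (auto simp: SB_def PiE_iff extensional_def)
qed

lemma MT_bound: "r \<le> \<alpha> \<Longrightarrow> j < r \<Longrightarrow> tri r j < \<alpha>"
proof (induction "\<alpha> - r" arbitrary: r j)
  case 0 then have "r = \<alpha>" by simp
  then show ?case using MT_top 0 by (simp add: e0_def)
next
  case (Suc k)
  then have r: "r < \<alpha>" by simp
  have "tri r j \<le> tri (Suc r) (Suc j)" using MT_interl[OF r] Suc.prems by (auto simp: interl_def)
  moreover have "tri (Suc r) (Suc j) < \<alpha>" using Suc r by auto
  ultimately show ?case by simp
qed

lemma MT_Usub: "r \<le> \<alpha> \<Longrightarrow> tri r ` {..<r} \<subseteq> {..<\<alpha>}"
  using MT_bound by auto

lemma MT_card: "r \<le> \<alpha> \<Longrightarrow> card (tri r ` {..<r}) = r"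
  using sinc_inj[OF MT_sinc] by (simp add: card_image)

lemma MT_Utop: "tri \<alpha> ` {..<\<alpha>} = {..<\<alpha>}"
  using MT_top by (auto simp: e0_def image_iff)

lemma col_prefix:
  assumes j: "j \<in> {1..\<alpha>}"
  shows "(\<Sum>i\<le>p. mat_of \<alpha> tri i j) = of_bool (j - 1 \<in> tri (min p \<alpha>) ` {..<min p \<alpha>})"
proof (induction p)
  case 0 then show ?case by (simp add: mat_of_def)
next
  case (Suc p)
  show ?case
  proof (cases "Suc p \<le> \<alpha>")
    case True
    then show ?thesis using Suc j by (simp add: mat_of_def min_def)
  next
    case False
    then have "mat_of \<alpha> tri (Suc p) j = 0" by (simp add: mat_of_def)
    moreover have "min (Suc p) \<alpha> = min p \<alpha>" using False by simp
    ultimately show ?thesis using Suc by simp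
  qed
qed

lemma row_prefix:
  assumes i: "i \<in> {1..\<alpha>}"
  shows "(\<Sum>j\<le>p. mat_of \<alpha> tri i j) = int (card {a. a < i \<and> tri i a < p}) - int (card {b. b < i - 1 \<and> tri (i - 1) b < p})"
proof -
  have "(\<Sum>j\<le>p. mat_of \<alpha> tri i j) = (\<Sum>j\<le>p. (if 1 \<le> j \<and> j \<le> \<alpha> then of_bool (j - 1 \<in> tri i ` {..<i}) else 0))
      - (\<Sum>j\<le>p. (if 1 \<le> j \<and> j \<le> \<alpha> then of_bool (j - 1 \<in> tri (i - 1) ` {..<i - 1}) else 0))"
    unfolding sum_subtractf[symmetric] using i by (intro sum.cong) (auto simp: mat_of_def)
  also have "\<dots> = int (card (tri i ` {..<i} \<inter> {..<p})) - int (card (tri (i - 1) ` {..<i - 1} \<inter> {..<p}))"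
  proof -
    have "(\<Sum>j\<le>p. (if 1 \<le> j \<and> j \<le> \<alpha> then of_bool (j - 1 \<in> tri i ` {..<i}) else 0)) = int (card (tri i ` {..<i} \<inter> {..<p}))"
      by (rule sumV) (rule MT_Usub, use i in auto)
    moreover have "(\<Sum>j\<le>p. (if 1 \<le> j \<and> j \<le> \<alpha> then of_bool (j - 1 \<in> tri (i - 1) ` {..<i - 1}) else 0)) = int (card (tri (i - 1) ` {..<i - 1} \<inter> {..<p}))"
      by (rule sumV) (rule MT_Usub, use i in auto)
    ultimately show ?thesis by (simp only:)
  qed
  also have "\<dots> = int (card {a. a < i \<and> tri i a < p}) - int (card {b. b < i - 1 \<and> tri (i - 1) b < p})"
  proof -
    have "inj_on (tri i) {..<i}" by (rule sinc_inj[OF MT_sinc]) (use i in auto)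
    moreover have "inj_on (tri (i - 1)) {..<i - 1}" by (rule sinc_inj[OF MT_sinc]) (use i in auto)
    ultimately show ?thesis by (simp only: card_image_cut)
  qed
  finally show ?thesis .
qed

lemma row_prefix01:
  assumes i: "i \<in> {1..\<alpha>}"
  shows "(\<Sum>j\<le>p. mat_of \<alpha> tri i j) \<in> {0,1}"
proof -
  obtain r where r: "i = Suc r" "r < \<alpha>" using i by (cases i) auto
  have it: "interl r (tri i) (tri r)" using MT_interl[OF r(2)] r by simp
  show ?thesis using cnt_bounds[OF it, of p] row_prefix[OF i, of p] r by auto
qed

lemma row_sum: "i \<in> {1..\<alpha>} \<Longrightarrow> (\<Sum>j\<in>{1..\<alpha>}. mat_of \<alpha> tri i j) = 1"
proof -
  assume i: "i \<in> {1..\<alpha>}"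
  have "(\<Sum>j\<le>\<alpha>. mat_of \<alpha> tri i j) = (\<Sum>j\<in>{1..\<alpha>}. mat_of \<alpha> tri i j)"
  proof -
    have "{..\<alpha>} = insert 0 {1..\<alpha>}" by auto
    then show ?thesis by (simp add: mat_of_def)
  qed
  moreover have "(\<Sum>j\<le>\<alpha>. mat_of \<alpha> tri i j) = int (card (tri i ` {..<i})) - int (card (tri (i - 1) ` {..<i - 1}))"
  proof -
    have "(\<Sum>j\<le>\<alpha>. mat_of \<alpha> tri i j) = (\<Sum>j\<le>\<alpha>. (if 1 \<le> j \<and> j \<le> \<alpha> then of_bool (j - 1 \<in> tri i ` {..<i}) else 0))
      - (\<Sum>j\<le>\<alpha>. (if 1 \<le> j \<and> j \<le> \<alpha> then of_bool (j - 1 \<in> tri (i - 1) ` {..<i - 1}) else 0))"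
      unfolding sum_subtractf[symmetric] using i by (intro sum.cong) (auto simp: mat_of_def)
    also have "\<dots> = int (card (tri i ` {..<i} \<inter> {..<\<alpha>})) - int (card (tri (i - 1) ` {..<i - 1} \<inter> {..<\<alpha>}))"
    proof -
      have "(\<Sum>j\<le>\<alpha>. (if 1 \<le> j \<and> j \<le> \<alpha> then of_bool (j - 1 \<in> tri i ` {..<i}) else 0)) = int (card (tri i ` {..<i} \<inter> {..<\<alpha>}))"
        by (rule sumV) (rule MT_Usub, use i in auto)
      moreover have "(\<Sum>j\<le>\<alpha>. (if 1 \<le> j \<and> j \<le> \<alpha> then of_bool (j - 1 \<in> tri (i - 1) ` {..<i - 1}) else 0)) = int (card (tri (i - 1) ` {..<i - 1} \<inter> {..<\<alpha>}))"
        by (rule sumV) (rule MT_Usub, use i in auto)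
      ultimately show ?thesis by (simp only:)
    qed
    also have "tri i ` {..<i} \<inter> {..<\<alpha>} = tri i ` {..<i}" using MT_Usub[of i] i by auto
    also have "tri (i - 1) ` {..<i - 1} \<inter> {..<\<alpha>} = tri (i - 1) ` {..<i - 1}"
    proof -
      have h: "i - 1 \<le> \<alpha>" using i by auto
      show ?thesis by (rule Int_absorb2[OF MT_Usub[OF h]])
    qed
    finally show ?thesis .
  qed
  moreover have "card (tri i ` {..<i}) = i" by (rule MT_card) (use i in auto)
  moreover have "card (tri (i - 1) ` {..<i - 1}) = i - 1" by (rule MT_card) (use i in auto)
  ultimately show ?thesis using i by simp
qed

lemma col_sum: "j \<in> {1..\<alpha>} \<Longrightarrow> (\<Sum>i\<in>{1..\<alpha>}. mat_of \<alpha> tri i j) = 1"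
proof -
  assume j: "j \<in> {1..\<alpha>}"
  have "{..\<alpha>} = insert 0 {1..\<alpha>}" by auto
  then have "(\<Sum>i\<le>\<alpha>. mat_of \<alpha> tri i j) = (\<Sum>i\<in>{1..\<alpha>}. mat_of \<alpha> tri i j)"
    by (simp add: mat_of_def)
  moreover have "j - 1 < \<alpha>" using j by auto
  then have "(\<Sum>i\<le>\<alpha>. mat_of \<alpha> tri i j) = 1" using col_prefix[OF j, of \<alpha>] by (simp add: MT_Utop)
  ultimately show ?thesis by simp
qed

lemma mat_of_ASM: "mat_of \<alpha> tri \<in> ASM \<alpha>"
proof -
  let ?A = "mat_of \<alpha> tri"
  have vals: "?A i j \<in> {-1,0,1}" for i j by (auto simp: mat_of_def)
  have rowalt: "?A i j1 = - ?A i j2" if "?A i j1 \<noteq> 0" "?A i j2 \<noteq> 0" "j1 < j2" "\<forall>j. j1 < j \<and> j < j2 \<longrightarrow> ?A i j = 0" for i j1 j2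
  proof (rule conv_alt[where v="?A i"])
    show "\<forall>p. (\<Sum>j\<le>p. ?A i j) \<in> {0,1}"
    proof
      fix p show "(\<Sum>j\<le>p. ?A i j) \<in> {0,1}"
      proof (cases "i \<in> {1..\<alpha>}")
        case True then show ?thesis by (rule row_prefix01)
      next
        case False then have "?A i j = 0" for j by (auto simp: mat_of_def)
        then show ?thesis by simp
      qed
    qed
  qed (use vals that in auto)
  have colalt: "?A i1 j = - ?A i2 j" if "?A i1 j \<noteq> 0" "?A i2 j \<noteq> 0" "i1 < i2" "\<forall>i. i1 < i \<and> i < i2 \<longrightarrow> ?A i j = 0" for j i1 i2
  proof (rule conv_alt[where v="\<lambda>i. ?A i j"])
    show "\<forall>p. (\<Sum>i\<le>p. ?A i j) \<in> {0,1}"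
    proof
      fix p show "(\<Sum>i\<le>p. ?A i j) \<in> {0,1}"
      proof (cases "j \<in> {1..\<alpha>}")
        case True then show ?thesis by (simp add: col_prefix)
      next
        case False then have "?A i j = 0" for i by (auto simp: mat_of_def)
        then show ?thesis by simp
      qed
    qed
  qed (use vals that in auto)
  show ?thesis unfolding ASM_def mem_Collect_eq
  proof (intro conjI)
    show "\<forall>i j. i \<notin> {1..\<alpha>} \<or> j \<notin> {1..\<alpha>} \<longrightarrow> ?A i j = 0" by (auto simp: mat_of_def)
    show "\<forall>i\<in>{1..\<alpha>}. \<forall>j\<in>{1..\<alpha>}. ?A i j \<in> {- 1, 0, 1}" using vals by blast
    show "\<forall>i\<in>{1..\<alpha>}. (\<Sum>j = 1..\<alpha>. ?A i j) = 1" using row_sum by blast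
    show "\<forall>j\<in>{1..\<alpha>}. (\<Sum>i = 1..\<alpha>. ?A i j) = 1" using col_sum by blast
    show "\<forall>i j1 j2. ?A i j1 \<noteq> 0 \<and> ?A i j2 \<noteq> 0 \<and> j1 < j2 \<and> (\<forall>j. j1 < j \<and> j < j2 \<longrightarrow> ?A i j = 0) \<longrightarrow> ?A i j1 = - ?A i j2"
      using rowalt by blast
    show "\<forall>j i1 i2. ?A i1 j \<noteq> 0 \<and> ?A i2 j \<noteq> 0 \<and> i1 < i2 \<and> (\<forall>i. i1 < i \<and> i < i2 \<longrightarrow> ?A i j = 0) \<longrightarrow> ?A i1 j = - ?A i2 j"
      using colalt by blast
  qed
qed

end


definition Uset :: "nat \<Rightarrow> (nat \<Rightarrow> nat \<Rightarrow> int) \<Rightarrow> nat \<Rightarrow> nat set" where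
  "Uset \<alpha> A r = {c. c < \<alpha> \<and> (\<Sum>i\<in>{1..r}. A i (Suc c)) = 1}"

definition tri_of :: "nat \<Rightarrow> (nat \<Rightarrow> nat \<Rightarrow> int) \<Rightarrow> nat \<Rightarrow> nat \<Rightarrow> nat" where
  "tri_of \<alpha> A r = (if r \<le> \<alpha> then restrict (srt (Uset \<alpha> A r)) {0..<r} else undefined)"

lemma tri_of_mat_of:
  assumes tri: "tri \<in> MT \<alpha> (e0 \<alpha>)"
  shows "tri_of \<alpha> (mat_of \<alpha> tri) = tri"
proof
  fix r show "tri_of \<alpha> (mat_of \<alpha> tri) r = tri r"
  proof (cases "r \<le> \<alpha>")
    case False then show ?thesis using MT_above[OF tri] by (simp add: tri_of_def)
  next
    case True
    have U: "Uset \<alpha> (mat_of \<alpha> tri) r = tri r ` {..<r}"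
    proof -
      have "(\<Sum>i\<in>{1..r}. mat_of \<alpha> tri i (Suc c)) = of_bool (c \<in> tri r ` {..<r})" if c: "c < \<alpha>" for c
      proof -
        have "{..r} = insert 0 {1..r}" by auto
        then have "(\<Sum>i\<in>{1..r}. mat_of \<alpha> tri i (Suc c)) = (\<Sum>i\<le>r. mat_of \<alpha> tri i (Suc c))"
          by (simp add: mat_of_def)
        also have "\<dots> = of_bool (c \<in> tri r ` {..<r})"
          using col_prefix[OF tri, of "Suc c" r] c True by (simp add: min_def)
        finally show ?thesis .
      qed
      then show ?thesis unfolding Uset_def using MT_Usub[OF tri True] by auto
    qed
    show ?thesis
    proof
      fix j show "tri_of \<alpha> (mat_of \<alpha> tri) r j = tri r j"
      proof (cases "j < r")
        case True
        then show ?thesis using \<open>r \<le> \<alpha>\<close> U srt_unique[OF MT_sinc[OF tri \<open>r \<le> \<alpha>\<close>] True] by (simp add: tri_of_def)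
      next
        case False
        then show ?thesis using \<open>r \<le> \<alpha>\<close> MT_ext[OF tri \<open>r \<le> \<alpha>\<close>, of j] by (simp add: tri_of_def)
      qed
    qed
  qed
qed

context
  fixes \<alpha> :: nat and A :: "nat \<Rightarrow> nat \<Rightarrow> int"
  assumes A: "A \<in> ASM \<alpha>"
begin

lemma A_zero: "i \<notin> {1..\<alpha>} \<or> j \<notin> {1..\<alpha>} \<Longrightarrow> A i j = 0"
  using A by (simp add: ASM_def)

lemma A_colpre: "(\<Sum>i\<in>{1..r}. A i j) \<in> {0,1}"
proof (cases "j \<in> {1..\<alpha>}")
  case True
  have "(\<Sum>i\<le>r. A i j) \<in> {0,1}"
  proof (rule alt_prefix[where v="\<lambda>i. A i j" and \<alpha>=\<alpha>])
    show "\<forall>j1 j2. A j1 j \<noteq> 0 \<and> A j2 j \<noteq> 0 \<and> j1 < j2 \<and> (\<forall>ja. j1 < ja \<and> ja < j2 \<longrightarrow> A ja j = 0) \<longrightarrow> A j1 j = - A j2 j"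
      using A by (simp add: ASM_def)
    show "\<forall>ja. ja \<notin> {1..\<alpha>} \<longrightarrow> A ja j = 0" using A_zero by auto
    show "(\<Sum>ja = 1..\<alpha>. A ja j) = 1" using A True by (simp add: ASM_def)
  qed
  moreover have "{..r} = insert 0 {1..r}" by auto
  ultimately show ?thesis using A_zero[of 0 j] by simp
next
  case False then show ?thesis using A_zero by simp
qed

lemma A_P: "j \<in> {1..\<alpha>} \<Longrightarrow> (\<Sum>i\<in>{1..r}. A i j) = of_bool (j - 1 \<in> Uset \<alpha> A r)"
proof -
  assume j: "j \<in> {1..\<alpha>}"
  then have "Suc (j - 1) = j" by auto
  then show ?thesis using A_colpre[where r=r and j=j] j unfolding Uset_def by auto
qed

lemma A_Usub: "Uset \<alpha> A r \<subseteq> {..<\<alpha>}" by (auto simp: Uset_def)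

lemma A_card: "r \<le> \<alpha> \<Longrightarrow> card (Uset \<alpha> A r) = r"
proof -
  assume r: "r \<le> \<alpha>"
  have "(\<Sum>j\<in>{1..\<alpha>}. of_bool (j - 1 \<in> Uset \<alpha> A r) * (1::int)) = (\<Sum>c\<in>Uset \<alpha> A r. 1)"
    by (rule sumW[OF A_Usub])
  then have "int (card (Uset \<alpha> A r)) = (\<Sum>j\<in>{1..\<alpha>}. of_bool (j - 1 \<in> Uset \<alpha> A r) * (1::int))"
    by simp
  also have "\<dots> = (\<Sum>j\<in>{1..\<alpha>}. \<Sum>i\<in>{1..r}. A i j)"
  proof (rule sum.cong[OF refl])
    fix j assume "j \<in> {1..\<alpha>}"
    then show "of_bool (j - 1 \<in> Uset \<alpha> A r) * (1::int) = (\<Sum>i\<in>{1..r}. A i j)"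
      using A_P[where j=j and r=r] by simp
  qed
  also have "\<dots> = (\<Sum>i\<in>{1..r}. \<Sum>j\<in>{1..\<alpha>}. A i j)" by (rule sum.swap)
  also have "\<dots> = (\<Sum>i\<in>{1..r}. 1)" using A r by (intro sum.cong) (auto simp: ASM_def)
  finally show ?thesis by simp
qed

lemma A_entry: "i \<in> {1..\<alpha>} \<Longrightarrow> j \<in> {1..\<alpha>} \<Longrightarrow> A i j = of_bool (j - 1 \<in> Uset \<alpha> A i) - of_bool (j - 1 \<in> Uset \<alpha> A (i - 1))"
proof -
  assume i: "i \<in> {1..\<alpha>}" and j: "j \<in> {1..\<alpha>}"
  have "{1..i} = insert i {1..i - 1}" using i by auto
  then have "(\<Sum>i'\<in>{1..i}. A i' j) = A i j + (\<Sum>i'\<in>{1..i - 1}. A i' j)" using i by (simp only:) (subst sum.insert, auto)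
  then show ?thesis using A_P[OF j, of i] A_P[OF j, of "i - 1"] by simp
qed

lemma A_rowpre: "i \<in> {1..\<alpha>} \<Longrightarrow> (\<Sum>j\<le>p. A i j) = int (card (Uset \<alpha> A i \<inter> {..<p})) - int (card (Uset \<alpha> A (i - 1) \<inter> {..<p}))"
proof -
  assume i: "i \<in> {1..\<alpha>}"
  have "(\<Sum>j\<le>p. A i j) = (\<Sum>j\<le>p. (if 1 \<le> j \<and> j \<le> \<alpha> then of_bool (j - 1 \<in> Uset \<alpha> A i) else 0))
      - (\<Sum>j\<le>p. (if 1 \<le> j \<and> j \<le> \<alpha> then of_bool (j - 1 \<in> Uset \<alpha> A (i - 1)) else 0))"
    unfolding sum_subtractf[symmetric]
  proof (rule sum.cong[OF refl])
    fix j show "A i j = (if 1 \<le> j \<and> j \<le> \<alpha> then of_bool (j - 1 \<in> Uset \<alpha> A i) else 0) - (if 1 \<le> j \<and> j \<le> \<alpha> then of_bool (j - 1 \<in> Uset \<alpha> A (i - 1)) else 0)"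
    proof (cases "j \<in> {1..\<alpha>}")
      case True then show ?thesis using A_entry[OF i True] by simp
    next
      case False then show ?thesis using A_zero by auto
    qed
  qed
  also have "\<dots> = int (card (Uset \<alpha> A i \<inter> {..<p})) - int (card (Uset \<alpha> A (i - 1) \<inter> {..<p}))"
    by (simp only: sumV[OF A_Usub])
  finally show ?thesis .
qed

lemma A_rowpre01: "i \<in> {1..\<alpha>} \<Longrightarrow> (\<Sum>j\<le>p. A i j) \<in> {0,1}"
proof -
  assume i: "i \<in> {1..\<alpha>}"
  show ?thesis
  proof (rule alt_prefix[where v="A i" and \<alpha>=\<alpha>])
    show "\<forall>j1 j2. A i j1 \<noteq> 0 \<and> A i j2 \<noteq> 0 \<and> j1 < j2 \<and> (\<forall>j. j1 < j \<and> j < j2 \<longrightarrow> A i j = 0) \<longrightarrow> A i j1 = - A i j2"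
      using A by (simp add: ASM_def)
    show "\<forall>j. j \<notin> {1..\<alpha>} \<longrightarrow> A i j = 0" using A_zero by auto
    show "(\<Sum>j = 1..\<alpha>. A i j) = 1" using A i by (simp add: ASM_def)
  qed
qed

lemma tri_of_MT: "tri_of \<alpha> A \<in> MT \<alpha> (e0 \<alpha>)"
proof -
  let ?T = "tri_of \<alpha> A"
  have top: "?T \<alpha> = e0 \<alpha>"
  proof -
    have U: "Uset \<alpha> A \<alpha> = (\<lambda>j. j) ` {..<\<alpha>}"
    proof -
      have "Uset \<alpha> A \<alpha> \<subseteq> {..<\<alpha>}" by (rule A_Usub)
      moreover have "card (Uset \<alpha> A \<alpha>) = \<alpha>" by (rule A_card) simp
      ultimately show ?thesis by (simp add: card_subset_eq)
    qed
    have "sinc \<alpha> (\<lambda>j. j)" by (simp add: sinc_def)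
    then have "srt (Uset \<alpha> A \<alpha>) j = j" if "j < \<alpha>" for j using srt_unique that U by metis
    then show ?thesis by (auto simp: tri_of_def e0_def)
  qed
  have step: "?T r \<in> SB (?T (Suc r)) r" if r: "r < \<alpha>" for r
  proof -
    let ?s = "srt (Uset \<alpha> A (Suc r))" and ?t = "srt (Uset \<alpha> A r)"
    have fin: "finite (Uset \<alpha> A k)" for k using A_Usub finite_subset by blast
    have cs: "card (Uset \<alpha> A (Suc r)) = Suc r" and ct: "card (Uset \<alpha> A r) = r"
      using A_card r by auto
    have ss: "sinc (Suc r) ?s" using srt_sinc[OF fin] cs by metis
    have st: "sinc r ?t" using srt_sinc[OF fin] ct by metis
    have hs: "?s ` {..<Suc r} = Uset \<alpha> A (Suc r)" using srt_image[OF fin] cs by metis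
    have ht: "?t ` {..<r} = Uset \<alpha> A r" using srt_image[OF fin] ct by metis
    have cnt_s: "card {a. a < Suc r \<and> ?s a < p} = card (Uset \<alpha> A (Suc r) \<inter> {..<p})" for p
      using card_image_cut[OF sinc_inj[OF ss], of p] hs by simp
    have cnt_t: "card {b. b < r \<and> ?t b < p} = card (Uset \<alpha> A r \<inter> {..<p})" for p
      using card_image_cut[OF sinc_inj[OF st], of p] ht by simp
    have pre: "int (card (Uset \<alpha> A (Suc r) \<inter> {..<p})) - int (card (Uset \<alpha> A r \<inter> {..<p})) \<in> {0,1}" for p
      using A_rowpre[of "Suc r" p] A_rowpre01[of "Suc r" p] r by simp
    have b1: "card (Uset \<alpha> A r \<inter> {..<p}) \<le> card (Uset \<alpha> A (Suc r) \<inter> {..<p})" for p using pre[of p] by auto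
    have b2: "card (Uset \<alpha> A (Suc r) \<inter> {..<p}) \<le> Suc (card (Uset \<alpha> A r \<inter> {..<p}))" for p using pre[of p] by auto
    have il: "interl r ?s ?t"
      by (rule interl_from_cnt[OF ss st]) (simp_all only: cnt_s cnt_t b1 b2)
    show ?thesis unfolding SB_def using il st r
      by (auto simp: tri_of_def interl_def sinc_def PiE_iff)
  qed
  show ?thesis unfolding MT_def using top step by (auto simp: tri_of_def)
qed

lemma mat_of_tri_of: "mat_of \<alpha> (tri_of \<alpha> A) = A"
proof (intro ext)
  fix i j
  show "mat_of \<alpha> (tri_of \<alpha> A) i j = A i j"
  proof (cases "i \<in> {1..\<alpha>} \<and> j \<in> {1..\<alpha>}")
    case False then show ?thesis using A_zero by (auto simp: mat_of_def)
  next
    case True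
    have fin: "finite (Uset \<alpha> A k)" for k using A_Usub finite_subset by blast
    have img: "tri_of \<alpha> A k ` {..<k} = Uset \<alpha> A k" if "k \<le> \<alpha>" for k
    proof -
      have "tri_of \<alpha> A k ` {..<k} = srt (Uset \<alpha> A k) ` {..<k}" using that by (auto simp: tri_of_def)
      also have "\<dots> = Uset \<alpha> A k" using srt_image[OF fin, of k] A_card[OF that] by simp
      finally show ?thesis .
    qed
    have e: "A i j = of_bool (j - 1 \<in> Uset \<alpha> A i) - of_bool (j - 1 \<in> Uset \<alpha> A (i - 1))"
      using True by (intro A_entry) auto
    have i1: "tri_of \<alpha> A i ` {..<i} = Uset \<alpha> A i" using True by (intro img) auto
    have i2: "tri_of \<alpha> A (i - 1) ` {..<i - 1} = Uset \<alpha> A (i - 1)" using True by (intro img) auto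
    show ?thesis using True unfolding mat_of_def e i1 i2 by auto
  qed
qed

end

lemma prod_if_const:
  fixes c :: "'a::comm_monoid_mult"
  shows "finite A \<Longrightarrow> (\<Prod>j\<in>A. if P j then c else 1) = c ^ card {j\<in>A. P j}"
  by (simp add: prod.If_cases Int_def)

lemma wgt_prod:
  fixes q :: "'a::comm_ring_1"
  assumes s: "sinc (Suc r) s" and it: "interl r s t"
  shows "(\<Prod>j<r. wgt q (s j) (s (Suc j)) (t j)) =
    (- q) ^ card {a. a < r \<and> t a = s (Suc a)} * (1 - q) ^ card {a. a < r \<and> s a < t a \<and> t a < s (Suc a)}"
proof -
  have "wgt q (s j) (s (Suc j)) (t j) = (if t j = s (Suc j) then - q else 1) * (if s j < t j \<and> t j < s (Suc j) then 1 - q else 1)"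
    if j: "j < r" for j
  proof -
    have "s j < s (Suc j)" using s j by (simp add: sinc_def)
    moreover have "s j \<le> t j" "t j \<le> s (Suc j)" using it j by (auto simp: interl_def)
    ultimately show ?thesis by (auto simp: wgt_def)
  qed
  then have "(\<Prod>j<r. wgt q (s j) (s (Suc j)) (t j)) = (\<Prod>j<r. (if t j = s (Suc j) then - q else 1) * (if s j < t j \<and> t j < s (Suc j) then 1 - q else 1))"
    by (intro prod.cong) auto
  also have "\<dots> = (\<Prod>j<r. (if t j = s (Suc j) then - q else 1)) * (\<Prod>j<r. (if s j < t j \<and> t j < s (Suc j) then 1 - q else 1))"
    by (rule prod.distrib)
  also have "\<dots> = (- q) ^ card {a. a < r \<and> t a = s (Suc a)} * (1 - q) ^ card {a. a < r \<and> s a < t a \<and> t a < s (Suc a)}"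
    by (simp add: prod_if_const)
  finally show ?thesis .
qed

lemma card_split_lt:
  assumes s: "sinc (Suc r) s" and it: "interl r s t"
  shows "card {a. a < r \<and> s a < t a} = card {a. a < r \<and> t a = s (Suc a)} + card {a. a < r \<and> s a < t a \<and> t a < s (Suc a)}"
proof -
  have key: "s a < s (Suc a)" "s a \<le> t a" "t a \<le> s (Suc a)" if "a < r" for a
    using s it that by (auto simp: sinc_def interl_def)
  have "{a. a < r \<and> s a < t a} = {a. a < r \<and> t a = s (Suc a)} \<union> {a. a < r \<and> s a < t a \<and> t a < s (Suc a)}"
  proof (rule Set.set_eqI)
    fix a show "a \<in> {a. a < r \<and> s a < t a} \<longleftrightarrow> a \<in> {a. a < r \<and> t a = s (Suc a)} \<union> {a. a < r \<and> s a < t a \<and> t a < s (Suc a)}"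
      by (cases "a < r") (use key[of a] in auto)
  qed
  moreover have "{a. a < r \<and> t a = s (Suc a)} \<inter> {a. a < r \<and> s a < t a \<and> t a < s (Suc a)} = {}" by auto
  ultimately show ?thesis by (simp add: card_Un_disjoint)
qed

context
  fixes \<alpha> :: nat and tri :: "nat \<Rightarrow> nat \<Rightarrow> nat"
  assumes tri: "tri \<in> MT \<alpha> (e0 \<alpha>)"
begin

lemma rowX:
  assumes i: "i \<in> {1..\<alpha>}"
  shows "(\<Sum>j\<in>{1..\<alpha>}. of_int (mat_of \<alpha> tri i j) * F j) =
     (\<Sum>c\<in>tri i ` {..<i}. F (Suc c)) - (\<Sum>c\<in>tri (i - 1) ` {..<i - 1}. F (Suc c) :: 'a::comm_ring_1)"
proof -
  have "(\<Sum>j\<in>{1..\<alpha>}. of_int (mat_of \<alpha> tri i j) * F j) =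
      (\<Sum>j\<in>{1..\<alpha>}. of_bool (j - 1 \<in> tri i ` {..<i}) * F j) - (\<Sum>j\<in>{1..\<alpha>}. of_bool (j - 1 \<in> tri (i - 1) ` {..<i - 1}) * F j)"
    unfolding sum_subtractf[symmetric] using i by (intro sum.cong) (auto simp: mat_of_def algebra_simps)
  also have "\<dots> = (\<Sum>c\<in>tri i ` {..<i}. F (Suc c)) - (\<Sum>c\<in>tri (i - 1) ` {..<i - 1}. F (Suc c))"
  proof -
    have "tri i ` {..<i} \<subseteq> {..<\<alpha>}" by (rule MT_Usub[OF tri]) (use i in auto)
    moreover have "tri (i - 1) ` {..<i - 1} \<subseteq> {..<\<alpha>}" by (rule MT_Usub[OF tri]) (use i in auto)
    ultimately show ?thesis by (simp only: sumW)
  qed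
  finally show ?thesis .
qed

lemma sum_img:
  assumes "r \<le> \<alpha>"
  shows "(\<Sum>c\<in>tri r ` {..<r}. F c) = (\<Sum>a<r. F (tri r a))"
  by (subst sum.reindex) (auto intro: sinc_inj[OF MT_sinc[OF tri assms]])

lemma mvec_row:
  assumes k: "k < \<alpha>"
  shows "mvec \<alpha> (mat_of \<alpha> tri) (Suc k) = int \<alpha> - 1 - (int (\<Sum>j<Suc k. tri (Suc k) j) - int (\<Sum>j<k. tri k j))"
proof -
  have "mvec \<alpha> (mat_of \<alpha> tri) (Suc k) = (\<Sum>j\<in>{1..\<alpha>}. of_int (mat_of \<alpha> tri (Suc k) j) * (int \<alpha> - int j))"
    by (simp add: mvec_def)
  also have "\<dots> = (\<Sum>c\<in>tri (Suc k) ` {..<Suc k}. int \<alpha> - int (Suc c)) - (\<Sum>c\<in>tri k ` {..<k}. int \<alpha> - int (Suc c))"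
    using rowX[of "Suc k" "\<lambda>j. int \<alpha> - int j"] k by simp
  also have "\<dots> = (\<Sum>a<Suc k. int \<alpha> - int (Suc (tri (Suc k) a))) - (\<Sum>a<k. int \<alpha> - int (Suc (tri k a)))"
    using k by (simp add: sum_img)
  also have "\<dots> = int \<alpha> - 1 - (int (\<Sum>j<Suc k. tri (Suc k) j) - int (\<Sum>j<k. tri k j))"
  proof -
    have h: "(\<Sum>a<m. int \<alpha> - int (Suc (f a))) = int m * (int \<alpha> - 1) - int (\<Sum>a<m. f a)" for m f
      by (induction m) (simp_all add: algebra_simps)
    show ?thesis unfolding h by (simp add: algebra_simps)
  qed
  finally show ?thesis .
qed

end

lemma sum_bool_lt:
  fixes m :: nat
  shows "(\<Sum>b<m. (of_bool (P b) :: int)) = int (card {b. b<m \<and> P b})"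
proof (induction m)
  case 0 then show ?case by simp
next
  case (Suc m)
  have e: "{b. b < Suc m \<and> P b} = {b. b<m \<and> P b} \<union> (if P m then {m} else {})" by (auto simp: less_Suc_eq)
  show ?case
  proof (cases "P m")
    case True
    have "card ({b. b<m \<and> P b} \<union> {m}) = Suc (card {b. b<m \<and> P b})" by (subst card_Un_disjoint) auto
    then show ?thesis using True Suc.IH e by simp
  next
    case False then show ?thesis using Suc.IH e by simp
  qed
qed

lemma sum_Suc_atLeast1: "(\<Sum>i\<in>{1..\<alpha>}. f i) = (\<Sum>k<\<alpha>. f (Suc k))"
proof -
  have "(\<Sum>i\<in>{1..\<alpha>}. f i) = (\<Sum>i\<in>Suc ` {..<\<alpha>}. f i)" by (simp only: image_Suc_lessThan)
  also have "\<dots> = (\<Sum>k<\<alpha>. f (Suc k))" by (subst sum.reindex) auto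
  finally show ?thesis .
qed

context
  fixes \<alpha> :: nat and tri :: "nat \<Rightarrow> nat \<Rightarrow> nat"
  assumes tri: "tri \<in> MT \<alpha> (e0 \<alpha>)"
begin

lemma neg_row:
  assumes k: "k < \<alpha>"
  shows "card {j. j \<in> {1..\<alpha>} \<and> mat_of \<alpha> tri (Suc k) j = -1} =
     card {a. a < k \<and> tri (Suc k) a < tri k a \<and> tri k a < tri (Suc k) (Suc a)}"
proof -
  let ?s = "tri (Suc k)" and ?t = "tri k"
  have "{j. j \<in> {1..\<alpha>} \<and> mat_of \<alpha> tri (Suc k) j = -1} = Suc ` (?t ` {..<k} - ?s ` {..<Suc k})"
  proof (rule Set.set_eqI)
    fix j
    have sub: "?t ` {..<k} \<subseteq> {..<\<alpha>}" using MT_Usub[OF tri, of k] k by simp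
    show "j \<in> {j. j \<in> {1..\<alpha>} \<and> mat_of \<alpha> tri (Suc k) j = -1} \<longleftrightarrow> j \<in> Suc ` (?t ` {..<k} - ?s ` {..<Suc k})"
    proof (cases j)
      case 0 then show ?thesis by (auto simp: mat_of_def)
    next
      case (Suc c)
      have "c \<in> ?t ` {..<k} \<Longrightarrow> c < \<alpha>" using sub by auto
      then show ?thesis using Suc k by (auto simp: mat_of_def)
    qed
  qed
  also have "card \<dots> = card (?t ` {..<k} - ?s ` {..<Suc k})" by (simp add: card_image)
  also have "?t ` {..<k} - ?s ` {..<Suc k} = ?t ` {a. a < k \<and> ?s a < ?t a \<and> ?t a < ?s (Suc a)}"
    by (rule tminus_s[OF MT_sinc[OF tri] MT_sinc[OF tri] MT_interl[OF tri k]]) (use k in auto)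
  also have "card \<dots> = card {a. a < k \<and> ?s a < ?t a \<and> ?t a < ?s (Suc a)}"
    by (rule card_image, rule inj_on_subset[OF sinc_inj[OF MT_sinc[OF tri]]]) (use k in auto)
  finally show ?thesis .
qed

lemma neg_num_mat:
  "neg_num \<alpha> (mat_of \<alpha> tri) = (\<Sum>k<\<alpha>. card {a. a < k \<and> tri (Suc k) a < tri k a \<and> tri k a < tri (Suc k) (Suc a)})"
proof -
  have "{(i,j). i \<in> {1..\<alpha>} \<and> j \<in> {1..\<alpha>} \<and> mat_of \<alpha> tri i j = -1} = Sigma {1..\<alpha>} (\<lambda>i. {j. j \<in> {1..\<alpha>} \<and> mat_of \<alpha> tri i j = -1})"
    by auto
  then have "neg_num \<alpha> (mat_of \<alpha> tri) = (\<Sum>i\<in>{1..\<alpha>}. card {j. j \<in> {1..\<alpha>} \<and> mat_of \<alpha> tri i j = -1})"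
    unfolding neg_num_def by (simp add: card_SigmaI)
  also have "\<dots> = (\<Sum>k<\<alpha>. card {j. j \<in> {1..\<alpha>} \<and> mat_of \<alpha> tri (Suc k) j = -1})"
    by (rule sum_Suc_atLeast1)
  also have "\<dots> = (\<Sum>k<\<alpha>. card {a. a < k \<and> tri (Suc k) a < tri k a \<and> tri k a < tri (Suc k) (Suc a)})"
    by (rule sum.cong[OF refl], rule neg_row) simp
  finally show ?thesis .
qed

lemma colP:
  assumes i: "i \<in> {1..\<alpha>}" and l: "l \<in> {1..\<alpha>}"
  shows "(\<Sum>k\<in>{1..\<alpha>}. if k < i then mat_of \<alpha> tri k l else 0) = of_bool (l - 1 \<in> tri (i - 1) ` {..<i - 1})"
proof -
  have "(\<Sum>k\<in>{1..\<alpha>}. if k < i then mat_of \<alpha> tri k l else 0) = (\<Sum>k\<le>i - 1. mat_of \<alpha> tri k l)"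
  proof -
    have "(\<Sum>k\<in>{1..\<alpha>}. if k < i then mat_of \<alpha> tri k l else 0) = (\<Sum>k\<in>{1..\<alpha>} \<inter> {k. k < i}. mat_of \<alpha> tri k l)"
      by (simp add: sum.inter_restrict)
    also have "{1..\<alpha>} \<inter> {k. k < i} = {1..i - 1}" using i by auto
    also have "(\<Sum>k\<in>{1..i - 1}. mat_of \<alpha> tri k l) = (\<Sum>k\<le>i - 1. mat_of \<alpha> tri k l)"
    proof -
      have "{..i - 1} = insert 0 {1..i - 1}" by auto
      then show ?thesis by (simp add: mat_of_def)
    qed
    finally show ?thesis .
  qed
  also have "\<dots> = of_bool (l - 1 \<in> tri (i - 1) ` {..<i - 1})"
  proof -
    have h: "min (i - 1) \<alpha> = i - 1" using i by auto
    show ?thesis using col_prefix[OF tri l, of "i - 1"] unfolding h .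
  qed
  finally show ?thesis .
qed

lemma inv_row_mat:
  assumes k: "k < \<alpha>"
  shows "(\<Sum>j\<in>{1..\<alpha>}. \<Sum>k'\<in>{1..\<alpha>}. \<Sum>l\<in>{1..\<alpha>}. if k' < Suc k \<and> j < l then mat_of \<alpha> tri (Suc k) j * mat_of \<alpha> tri k' l else 0)
      = int (card {a. a < k \<and> tri (Suc k) a < tri k a})"
proof -
  let ?A = "mat_of \<alpha> tri" and ?i = "Suc k"
  let ?s = "tri (Suc k)" and ?t = "tri k"
  have i: "?i \<in> {1..\<alpha>}" using k by auto
  have step1: "(\<Sum>k'\<in>{1..\<alpha>}. \<Sum>l\<in>{1..\<alpha>}. if k' < ?i \<and> j < l then ?A ?i j * ?A k' l else 0)
      = ?A ?i j * (\<Sum>l\<in>{1..\<alpha>}. if j < l then (\<Sum>k'\<in>{1..\<alpha>}. if k' < ?i then ?A k' l else 0) else 0)" for j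
  proof -
    have "(\<Sum>k'\<in>{1..\<alpha>}. \<Sum>l\<in>{1..\<alpha>}. if k' < ?i \<and> j < l then ?A ?i j * ?A k' l else 0)
       = (\<Sum>l\<in>{1..\<alpha>}. \<Sum>k'\<in>{1..\<alpha>}. if k' < ?i \<and> j < l then ?A ?i j * ?A k' l else 0)"
      by (rule sum.swap)
    also have "\<dots> = (\<Sum>l\<in>{1..\<alpha>}. ?A ?i j * (if j < l then (\<Sum>k'\<in>{1..\<alpha>}. if k' < ?i then ?A k' l else 0) else 0))"
    proof (rule sum.cong[OF refl])
      fix l show "(\<Sum>k'\<in>{1..\<alpha>}. if k' < ?i \<and> j < l then ?A ?i j * ?A k' l else 0) = ?A ?i j * (if j < l then (\<Sum>k'\<in>{1..\<alpha>}. if k' < ?i then ?A k' l else 0) else 0)"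
        by (cases "j < l") (auto simp: sum_distrib_left intro!: sum.cong)
    qed
    finally show ?thesis by (simp add: sum_distrib_left)
  qed
  have step2: "(\<Sum>l\<in>{1..\<alpha>}. if j < l then (\<Sum>k'\<in>{1..\<alpha>}. if k' < ?i then ?A k' l else 0) else 0)
      = (\<Sum>d\<in>?t ` {..<k}. of_bool (j < Suc d))" for j
  proof -
    have "(\<Sum>l\<in>{1..\<alpha>}. if j < l then (\<Sum>k'\<in>{1..\<alpha>}. if k' < ?i then ?A k' l else 0) else 0)
        = (\<Sum>l\<in>{1..\<alpha>}. of_bool (l - 1 \<in> ?t ` {..<k}) * of_bool (j < l))"
      by (intro sum.cong refl) (use colP[OF i] in auto)
    also have "\<dots> = (\<Sum>d\<in>?t ` {..<k}. of_bool (j < Suc d))"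
      by (rule sumW) (rule MT_Usub[OF tri], use k in auto)
    finally show ?thesis .
  qed
  have step3: "(\<Sum>d\<in>?t ` {..<k}. (of_bool (Suc c < Suc d) :: int)) = int (card {b. b < k \<and> c < ?t b})" for c
  proof -
    have "(\<Sum>d\<in>?t ` {..<k}. (of_bool (Suc c < Suc d) :: int)) = (\<Sum>b<k. of_bool (Suc c < Suc (?t b)))"
      by (rule sum_img[OF tri]) (use k in auto)
    also have "\<dots> = (\<Sum>b<k. (of_bool (c < ?t b) :: int))" by simp
    also have "\<dots> = int (card {b. b < k \<and> c < ?t b})" by (rule sum_bool_lt)
    finally show ?thesis .
  qed
  have "(\<Sum>j\<in>{1..\<alpha>}. \<Sum>k'\<in>{1..\<alpha>}. \<Sum>l\<in>{1..\<alpha>}. if k' < Suc k \<and> j < l then ?A ?i j * ?A k' l else 0)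
      = (\<Sum>j\<in>{1..\<alpha>}. of_int (?A ?i j) * (\<Sum>d\<in>?t ` {..<k}. of_bool (j < Suc d)))"
    by (rule sum.cong[OF refl]) (simp only: step1 step2 of_int_eq_id id_apply)
  also have "\<dots> = (\<Sum>c\<in>?s ` {..<Suc k}. \<Sum>d\<in>?t ` {..<k}. (of_bool (Suc c < Suc d) :: int))
       - (\<Sum>c\<in>?t ` {..<k}. \<Sum>d\<in>?t ` {..<k}. (of_bool (Suc c < Suc d) :: int))"
    using rowX[OF tri i, of "\<lambda>j. (\<Sum>d\<in>?t ` {..<k}. of_bool (j < Suc d) :: int)"] by simp
  also have "\<dots> = (\<Sum>c\<in>?s ` {..<Suc k}. int (card {b. b < k \<and> c < ?t b})) - (\<Sum>c\<in>?t ` {..<k}. int (card {b. b < k \<and> c < ?t b}))"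
    by (simp only: step3)
  also have "\<dots> = (\<Sum>a<Suc k. int (card {b. b < k \<and> ?s a < ?t b})) - (\<Sum>a<k. int (card {b. b < k \<and> ?t a < ?t b}))"
    by (simp only: sum_img[OF tri Suc_leI[OF k]] sum_img[OF tri less_imp_le[OF k]])
  also have "\<dots> = int (\<Sum>a<Suc k. card {b. b < k \<and> ?s a < ?t b}) - int (\<Sum>a<k. card {b. b < k \<and> ?t a < ?t b})"
    by (simp only: of_nat_sum)
  also have "\<dots> = int (card {a. a < k \<and> ?s a < ?t a})"
  proof -
    have "(\<Sum>a<Suc k. card {b. b < k \<and> ?s a < ?t b}) = (\<Sum>a<k. card {b. b < k \<and> ?t a < ?t b}) + card {a. a < k \<and> ?s a < ?t a}"
      by (rule inv_row[OF MT_sinc[OF tri] MT_sinc[OF tri] MT_interl[OF tri k]]) (use k in auto)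
    then show ?thesis by simp
  qed
  finally show ?thesis .
qed

lemma inv_num_mat:
  "inv_num \<alpha> (mat_of \<alpha> tri) = (\<Sum>k<\<alpha>. int (card {a. a < k \<and> tri (Suc k) a < tri k a}))"
proof -
  have "inv_num \<alpha> (mat_of \<alpha> tri) = (\<Sum>k<\<alpha>. \<Sum>j\<in>{1..\<alpha>}. \<Sum>k'\<in>{1..\<alpha>}. \<Sum>l\<in>{1..\<alpha>}. if k' < Suc k \<and> j < l then mat_of \<alpha> tri (Suc k) j * mat_of \<alpha> tri k' l else 0)"
    unfolding inv_num_def by (rule sum_Suc_atLeast1)
  also have "\<dots> = (\<Sum>k<\<alpha>. int (card {a. a < k \<and> tri (Suc k) a < tri k a}))"
    by (rule sum.cong[OF refl], rule inv_row_mat) simp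
  finally show ?thesis .
qed

end

definition WA :: "'a::field \<Rightarrow> (nat \<Rightarrow> 'a) \<Rightarrow> nat \<Rightarrow> (nat \<Rightarrow> nat \<Rightarrow> int) \<Rightarrow> 'a" where
  "WA q y \<alpha> A = (- q) powi (inv_num \<alpha> A - int (neg_num \<alpha> A)) * (1 - q) ^ neg_num \<alpha> A *
      (\<Prod>k<\<alpha>. y k powi (int \<alpha> - 1 - mvec \<alpha> A (Suc k)))"

lemma WA_mat:
  fixes q :: "'a::field"
  assumes tri: "tri \<in> MT \<alpha> (e0 \<alpha>)"
  shows "WA q y \<alpha> (mat_of \<alpha> tri) = (\<Prod>k<\<alpha>. stepw q y k (tri (Suc k)) (tri k))"
proof -
  define req where "req k = card {a. a < k \<and> tri k a = tri (Suc k) (Suc a)}" for k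
  define mid where "mid k = card {a. a < k \<and> tri (Suc k) a < tri k a \<and> tri k a < tri (Suc k) (Suc a)}" for k
  define S where "S k = (\<Sum>j<Suc k. tri (Suc k) j)" for k
  define T where "T k = (\<Sum>j<k. tri k j)" for k
  have lt: "card {a. a < k \<and> tri (Suc k) a < tri k a} = req k + mid k" if "k < \<alpha>" for k
    unfolding req_def mid_def
    by (rule card_split_lt[OF MT_sinc[OF tri] MT_interl[OF tri that]]) (use that in auto)
  have TS: "T k \<le> S k" if k: "k < \<alpha>" for k
  proof -
    have "T k \<le> (\<Sum>j<k. tri (Suc k) (Suc j))"
      unfolding T_def by (rule sum_mono) (use MT_interl[OF tri k] in \<open>auto simp: interl_def\<close>)
    also have "\<dots> \<le> S k"
    proof -
      have "S k = tri (Suc k) 0 + (\<Sum>j<k. tri (Suc k) (Suc j))" unfolding S_def by (rule sum.lessThan_Suc_shift)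
      then show ?thesis by linarith
    qed
    finally show ?thesis .
  qed
  have inv: "inv_num \<alpha> (mat_of \<alpha> tri) - int (neg_num \<alpha> (mat_of \<alpha> tri)) = int (\<Sum>k<\<alpha>. req k)"
  proof -
    have "inv_num \<alpha> (mat_of \<alpha> tri) = (\<Sum>k<\<alpha>. int (req k + mid k))"
      unfolding inv_num_mat[OF tri] by (intro sum.cong refl) (simp add: lt)
    moreover have "int (neg_num \<alpha> (mat_of \<alpha> tri)) = (\<Sum>k<\<alpha>. int (mid k))"
      unfolding neg_num_mat[OF tri] mid_def by (simp add: of_nat_sum)
    ultimately show ?thesis by (simp add: of_nat_sum sum.distrib)
  qed
  have neg: "neg_num \<alpha> (mat_of \<alpha> tri) = (\<Sum>k<\<alpha>. mid k)"
    unfolding neg_num_mat[OF tri] mid_def by simp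
  have yk: "y k powi (int \<alpha> - 1 - mvec \<alpha> (mat_of \<alpha> tri) (Suc k)) = y k ^ (S k - T k)" if k: "k < \<alpha>" for k
  proof -
    have "int \<alpha> - 1 - mvec \<alpha> (mat_of \<alpha> tri) (Suc k) = int (S k - T k)"
      using mvec_row[OF tri k] TS[OF k] unfolding S_def T_def by simp
    then show ?thesis by simp
  qed
  have st: "stepw q y k (tri (Suc k)) (tri k) = (- q) ^ req k * (1 - q) ^ mid k * y k ^ (S k - T k)" if k: "k < \<alpha>" for k
    unfolding stepw_def req_def mid_def S_def T_def
    by (subst wgt_prod[OF MT_sinc[OF tri] MT_interl[OF tri k]]) (use k in auto)
  have "WA q y \<alpha> (mat_of \<alpha> tri) = (- q) ^ (\<Sum>k<\<alpha>. req k) * (1 - q) ^ (\<Sum>k<\<alpha>. mid k) * (\<Prod>k<\<alpha>. y k ^ (S k - T k))"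
    unfolding WA_def inv power_int_of_nat unfolding neg by (simp add: yk)
  also have "\<dots> = (\<Prod>k<\<alpha>. (- q) ^ req k * (1 - q) ^ mid k * y k ^ (S k - T k))"
    by (simp add: power_sum prod.distrib)
  also have "\<dots> = (\<Prod>k<\<alpha>. stepw q y k (tri (Suc k)) (tri k))"
    by (intro prod.cong refl) (simp add: st)
  finally show ?thesis .
qed

theorem asm_sum:
  fixes q :: "'a::field"
  shows "(\<Sum>A\<in>ASM \<alpha>. WA q y \<alpha> A) = Pq q y \<alpha>"
proof -
  have "(\<Sum>A\<in>ASM \<alpha>. WA q y \<alpha> A) = (\<Sum>tri\<in>MT \<alpha> (e0 \<alpha>). WA q y \<alpha> (mat_of \<alpha> tri))"
    by (rule sum.reindex_bij_witness[where i="mat_of \<alpha>" and j="tri_of \<alpha>"])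
      (auto simp: mat_of_tri_of tri_of_MT tri_of_mat_of mat_of_ASM)
  also have "\<dots> = (\<Sum>tri\<in>MT \<alpha> (e0 \<alpha>). \<Prod>k<\<alpha>. stepw q y k (tri (Suc k)) (tri k))"
    by (intro sum.cong refl) (simp add: WA_mat)
  also have "\<dots> = G q y \<alpha> (e0 \<alpha>)" by (simp add: G_MT)
  also have "\<dots> = G q y \<alpha> (\<lambda>j. j)" by (rule G_cong) (simp add: e0_def)
  also have "\<dots> = Pq q y \<alpha>" by (rule G_id)
  finally show ?thesis .
qed


lemma opprod_Nil: "opprod [] f = f" by (simp add: opprod_def)
lemma opprod_Cons: "opprod (g # gs) f = g (opprod gs f)" by (simp add: opprod_def)

lemma lin_expand:
  fixes q :: "'a::field" and c :: "'s \<Rightarrow> 'a" and d :: "'t \<Rightarrow> 'a"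
  assumes fS: "finite S" and fT: "finite T" and q: "q \<noteq> 0"
    and x: "\<forall>i\<in>{1..N}. x i \<noteq> 0"
    and lenS: "\<forall>s\<in>S. length (E s) = L" and lenT: "\<forall>t\<in>T. length (F t) = L"
    and hyp: "\<forall>y::nat\<Rightarrow>'a. (\<forall>k<L. y k \<noteq> 0) \<longrightarrow>
        (\<Sum>s\<in>S. c s * (\<Prod>k<L. y k powi (E s ! k))) = (\<Sum>t\<in>T. d t * (\<Prod>k<L. y k powi (F t ! k)))"
  shows "(\<Sum>s\<in>S. c s * opprod (map (Mop q N) (E s)) f x) = (\<Sum>t\<in>T. d t * opprod (map (Mop q N) (F t)) f x)"
  using x lenS lenT hyp
proof (induction L arbitrary: c d E F x)
  case 0
  have "E s = []" if "s \<in> S" for s using 0 that by auto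
  moreover have "F t = []" if "t \<in> T" for t using 0 that by auto
  moreover have "(\<Sum>s\<in>S. c s) = (\<Sum>t\<in>T. d t)" using 0(4) by auto
  ultimately show ?case by (simp add: opprod_Nil sum_distrib_right[symmetric])
next
  case (Suc L)
  define C where "C i = (\<Prod>j\<in>{1..N} - {i}. x i / (x i - x j))" for i
  define x' where "x' i = x(i := q * x i)" for i
  have Es: "E s = E s ! 0 # tl (E s)" if "s \<in> S" for s using Suc.prems(2) that by (cases "E s") auto
  have Ft: "F t = F t ! 0 # tl (F t)" if "t \<in> T" for t using Suc.prems(3) that by (cases "F t") auto
  have expS: "opprod (map (Mop q N) (E s)) f x = (\<Sum>i\<in>{1..N}. C i * (x i powi (E s ! 0) * opprod (map (Mop q N) (tl (E s))) f (x' i)))"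
    if "s \<in> S" for s
    by (subst Es[OF that]) (simp add: opprod_Cons Mop_def C_def x'_def algebra_simps)
  have expT: "opprod (map (Mop q N) (F t)) f x = (\<Sum>i\<in>{1..N}. C i * (x i powi (F t ! 0) * opprod (map (Mop q N) (tl (F t))) f (x' i)))"
    if "t \<in> T" for t
    by (subst Ft[OF that]) (simp add: opprod_Cons Mop_def C_def x'_def algebra_simps)
  have inner: "(\<Sum>s\<in>S. (c s * x i powi (E s ! 0)) * opprod (map (Mop q N) (tl (E s))) f (x' i))
      = (\<Sum>t\<in>T. (d t * x i powi (F t ! 0)) * opprod (map (Mop q N) (tl (F t))) f (x' i))" if i: "i \<in> {1..N}" for i
  proof (rule Suc.IH)
    show "\<forall>j\<in>{1..N}. x' i j \<noteq> 0" using Suc.prems(1) q i by (auto simp: x'_def)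
    show "\<forall>s\<in>S. length (tl (E s)) = L" using Suc.prems(2) by auto
    show "\<forall>t\<in>T. length (tl (F t)) = L" using Suc.prems(3) by auto
    show "\<forall>y::nat\<Rightarrow>'a. (\<forall>k<L. y k \<noteq> 0) \<longrightarrow>
        (\<Sum>s\<in>S. c s * x i powi (E s ! 0) * (\<Prod>k<L. y k powi (tl (E s) ! k))) =
        (\<Sum>t\<in>T. d t * x i powi (F t ! 0) * (\<Prod>k<L. y k powi (tl (F t) ! k)))"
    proof (intro allI impI)
      fix y :: "nat \<Rightarrow> 'a" assume y: "\<forall>k<L. y k \<noteq> 0"
      define y' where "y' k = (if k = 0 then x i else y (k - 1))" for k
      have y': "\<forall>k<Suc L. y' k \<noteq> 0" using y Suc.prems(1) i by (auto simp: y'_def)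
      have pS: "(\<Prod>k<Suc L. y' k powi (E s ! k)) = x i powi (E s ! 0) * (\<Prod>k<L. y k powi (tl (E s) ! k))"
        if "s \<in> S" for s
      proof -
        have "(\<Prod>k<Suc L. y' k powi (E s ! k)) = y' 0 powi (E s ! 0) * (\<Prod>k<L. y' (Suc k) powi (E s ! Suc k))"
          by (rule prod.lessThan_Suc_shift)
        also have "(\<Prod>k<L. y' (Suc k) powi (E s ! Suc k)) = (\<Prod>k<L. y k powi (tl (E s) ! k))"
          by (intro prod.cong refl) (use Suc.prems(2) that in \<open>auto simp: y'_def nth_tl\<close>)
        finally show ?thesis by (simp add: y'_def)
      qed
      have pT: "(\<Prod>k<Suc L. y' k powi (F t ! k)) = x i powi (F t ! 0) * (\<Prod>k<L. y k powi (tl (F t) ! k))"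
        if "t \<in> T" for t
      proof -
        have "(\<Prod>k<Suc L. y' k powi (F t ! k)) = y' 0 powi (F t ! 0) * (\<Prod>k<L. y' (Suc k) powi (F t ! Suc k))"
          by (rule prod.lessThan_Suc_shift)
        also have "(\<Prod>k<L. y' (Suc k) powi (F t ! Suc k)) = (\<Prod>k<L. y k powi (tl (F t) ! k))"
          by (intro prod.cong refl) (use Suc.prems(3) that in \<open>auto simp: y'_def nth_tl\<close>)
        finally show ?thesis by (simp add: y'_def)
      qed
      have "(\<Sum>s\<in>S. c s * (\<Prod>k<Suc L. y' k powi (E s ! k))) = (\<Sum>t\<in>T. d t * (\<Prod>k<Suc L. y' k powi (F t ! k)))"
        using Suc.prems(4) y' by blast
      show "(\<Sum>s\<in>S. c s * x i powi (E s ! 0) * (\<Prod>k<L. y k powi (tl (E s) ! k))) =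
        (\<Sum>t\<in>T. d t * x i powi (F t ! 0) * (\<Prod>k<L. y k powi (tl (F t) ! k)))"
      proof -
        have eS: "(\<Sum>s\<in>S. c s * (\<Prod>k<Suc L. y' k powi (E s ! k))) = (\<Sum>s\<in>S. c s * x i powi (E s ! 0) * (\<Prod>k<L. y k powi (tl (E s) ! k)))"
          by (rule sum.cong[OF refl]) (simp only: pS mult.assoc)
        have eT: "(\<Sum>t\<in>T. d t * (\<Prod>k<Suc L. y' k powi (F t ! k))) = (\<Sum>t\<in>T. d t * x i powi (F t ! 0) * (\<Prod>k<L. y k powi (tl (F t) ! k)))"
          by (rule sum.cong[OF refl]) (simp only: pT mult.assoc)
        show ?thesis using \<open>(\<Sum>s\<in>S. c s * (\<Prod>k<Suc L. y' k powi (E s ! k))) = (\<Sum>t\<in>T. d t * (\<Prod>k<Suc L. y' k powi (F t ! k)))\<close>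
          unfolding eS eT .
      qed
    qed
  qed
  have "(\<Sum>s\<in>S. c s * opprod (map (Mop q N) (E s)) f x)
      = (\<Sum>s\<in>S. \<Sum>i\<in>{1..N}. C i * ((c s * x i powi (E s ! 0)) * opprod (map (Mop q N) (tl (E s))) f (x' i)))"
    by (rule sum.cong[OF refl]) (simp add: expS sum_distrib_left algebra_simps)
  also have "\<dots> = (\<Sum>i\<in>{1..N}. \<Sum>s\<in>S. C i * ((c s * x i powi (E s ! 0)) * opprod (map (Mop q N) (tl (E s))) f (x' i)))"
    by (rule sum.swap)
  also have "\<dots> = (\<Sum>i\<in>{1..N}. C i * (\<Sum>s\<in>S. (c s * x i powi (E s ! 0)) * opprod (map (Mop q N) (tl (E s))) f (x' i)))"
    by (simp add: sum_distrib_left)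
  also have "\<dots> = (\<Sum>i\<in>{1..N}. C i * (\<Sum>t\<in>T. (d t * x i powi (F t ! 0)) * opprod (map (Mop q N) (tl (F t))) f (x' i)))"
    by (intro sum.cong refl) (simp add: inner)
  also have "\<dots> = (\<Sum>i\<in>{1..N}. \<Sum>t\<in>T. C i * ((d t * x i powi (F t ! 0)) * opprod (map (Mop q N) (tl (F t))) f (x' i)))"
    by (simp add: sum_distrib_left)
  also have "\<dots> = (\<Sum>t\<in>T. \<Sum>i\<in>{1..N}. C i * ((d t * x i powi (F t ! 0)) * opprod (map (Mop q N) (tl (F t))) f (x' i)))"
    by (rule sum.swap)
  also have "\<dots> = (\<Sum>t\<in>T. d t * opprod (map (Mop q N) (F t)) f x)"
    by (rule sum.cong[OF refl]) (simp add: expT sum_distrib_left algebra_simps)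
  finally show ?case .
qed

lemma finite_pairs: "finite (pairs \<alpha>)"
  by (rule finite_subset[of _ "{1..\<alpha>} \<times> {1..\<alpha>}"]) (auto simp: pairs_def)

lemma card_fib1:
  assumes "finite S" "(a,b) \<notin> S"
  shows "card {i. (i,k) \<in> insert (a,b) S} = card {i. (i,k) \<in> S} + (if k = b then 1 else 0)"
proof -
  have sub: "{i. (i,k) \<in> S} \<subseteq> fst ` S"
  proof
    fix i assume "i \<in> {i. (i,k) \<in> S}"
    then have "(i,k) \<in> S" by simp
    then show "i \<in> fst ` S" by (rule rev_image_eqI) simp
  qed
  have fin: "finite {i. (i,k) \<in> S}" by (rule finite_subset[OF sub]) (use assms in auto)
  show ?thesis
  proof (cases "k = b")
    case True
    then have "{i. (i,k) \<in> insert (a,b) S} = insert a {i. (i,k) \<in> S}" by auto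
    moreover have "a \<notin> {i. (i,k) \<in> S}" using assms True by auto
    ultimately show ?thesis using fin True by simp
  next
    case False
    then have "{i. (i,k) \<in> insert (a,b) S} = {i. (i,k) \<in> S}" by auto
    then show ?thesis using False by simp
  qed
qed

lemma card_fib2:
  assumes "finite S" "(a,b) \<notin> S"
  shows "card {j. (k,j) \<in> insert (a,b) S} = card {j. (k,j) \<in> S} + (if k = a then 1 else 0)"
proof -
  have sub: "{j. (k,j) \<in> S} \<subseteq> snd ` S"
  proof
    fix j assume "j \<in> {j. (k,j) \<in> S}"
    then have "(k,j) \<in> S" by simp
    then show "j \<in> snd ` S" by (rule rev_image_eqI) simp
  qed
  have fin: "finite {j. (k,j) \<in> S}" by (rule finite_subset[OF sub]) (use assms in auto)
  show ?thesis
  proof (cases "k = a")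
    case True
    then have "{j. (k,j) \<in> insert (a,b) S} = insert b {j. (k,j) \<in> S}" by auto
    moreover have "b \<notin> {j. (k,j) \<in> S}" using assms True by auto
    ultimately show ?thesis using fin True by simp
  next
    case False
    then have "{j. (k,j) \<in> insert (a,b) S} = {j. (k,j) \<in> S}" by auto
    then show ?thesis using False by simp
  qed
qed

lemma prod_delta_Suc:
  fixes y :: "nat \<Rightarrow> 'a::field"
  assumes "1 \<le> a" "a \<le> \<alpha>"
  shows "(\<Prod>k<\<alpha>. if Suc k = a then g k else 1) = g (a - 1)"
proof -
  have "(\<Prod>k<\<alpha>. if Suc k = a then g k else 1) = (\<Prod>k<\<alpha>. if k = a - 1 then g k else 1)"
    using assms by (intro prod.cong) auto
  also have "\<dots> = g (a - 1)"
  proof -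
    have "a - 1 < \<alpha>" using assms by auto
    then show ?thesis by (simp add: prod.delta)
  qed
  finally show ?thesis .
qed

lemma shift_prod:
  fixes y :: "nat \<Rightarrow> 'a::field"
  assumes S: "S \<subseteq> pairs \<alpha>" and y: "\<forall>k<\<alpha>. y k \<noteq> 0"
  shows "(\<Prod>k<\<alpha>. y k powi (- shift_exp S (Suc k))) = (\<Prod>p\<in>S. y (fst p - 1) / y (snd p - 1))"
proof -
  have "finite S" using S finite_pairs finite_subset by blast
  then show ?thesis using S
  proof (induction rule: finite_subset_induct)
    case empty then show ?case by (simp add: shift_exp_def)
  next
    case (insert p F)
    obtain a b where p: "p = (a,b)" by (cases p)
    have ab: "1 \<le> a" "a < b" "b \<le> \<alpha>" using insert.hyps(2) p by (auto simp: pairs_def)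
    have sh: "- shift_exp (insert p F) (Suc k) = - shift_exp F (Suc k) + of_bool (Suc k = a) + (- of_bool (Suc k = b))" for k
      unfolding shift_exp_def p using card_fib1[OF insert.hyps(1) insert.hyps(3)[unfolded p], of "Suc k"]
        card_fib2[OF insert.hyps(1) insert.hyps(3)[unfolded p], of "Suc k"] by simp
    have "(\<Prod>k<\<alpha>. y k powi (- shift_exp (insert p F) (Suc k)))
        = (\<Prod>k<\<alpha>. y k powi (- shift_exp F (Suc k)) * (if Suc k = a then y k else 1) * (if Suc k = b then inverse (y k) else 1))"
    proof (rule prod.cong[OF refl])
      fix k assume k: "k \<in> {..<\<alpha>}"
      then have yk: "y k \<noteq> 0" using y by auto
      show "y k powi (- shift_exp (insert p F) (Suc k)) = y k powi (- shift_exp F (Suc k)) * (if Suc k = a then y k else 1) * (if Suc k = b then inverse (y k) else 1)"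
        unfolding sh power_int_add[OF disjI1[OF yk]]
        by (cases "Suc k = a"; cases "Suc k = b") (simp_all add: power_int_minus)
    qed
    also have "\<dots> = (\<Prod>k<\<alpha>. y k powi (- shift_exp F (Suc k))) * y (a - 1) * inverse (y (b - 1))"
      using ab by (simp add: prod.distrib prod_delta_Suc[of a \<alpha>] prod_delta_Suc[of b \<alpha>])
    also have "\<dots> = (\<Prod>p\<in>insert p F. y (fst p - 1) / y (snd p - 1))"
      using insert.IH insert.hyps(1,3) p by (simp add: divide_inverse mult_ac)
    finally show ?case .
  qed
qed

lemma lhs_y:
  fixes y :: "nat \<Rightarrow> 'a::field"
  assumes y: "\<forall>k<\<alpha>. y k \<noteq> 0"
  shows "(\<Sum>S\<in>Pow (pairs \<alpha>). (- q) ^ card S * (\<Prod>k<\<alpha>. y k powi (a (Suc k) - shift_exp S (Suc k))))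
     = (\<Prod>k<\<alpha>. y k powi a (Suc k)) * (\<Prod>p\<in>pairs \<alpha>. (- q) * (y (fst p - 1) / y (snd p - 1)) + 1)"
proof -
  have e1: "(- q) ^ card S * (\<Prod>k<\<alpha>. y k powi (a (Suc k) - shift_exp S (Suc k)))
      = (\<Prod>k<\<alpha>. y k powi a (Suc k)) * (\<Prod>p\<in>S. (- q) * (y (fst p - 1) / y (snd p - 1)))" if S: "S \<in> Pow (pairs \<alpha>)" for S
  proof -
    have fS: "finite S" using S finite_pairs finite_subset by auto
    have "(\<Prod>k<\<alpha>. y k powi (a (Suc k) - shift_exp S (Suc k))) = (\<Prod>k<\<alpha>. y k powi a (Suc k) * y k powi (- shift_exp S (Suc k)))"
    proof (rule prod.cong[OF refl])
      fix k assume "k \<in> {..<\<alpha>}" then have yk: "y k \<noteq> 0" using y by auto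
      have "a (Suc k) - shift_exp S (Suc k) = a (Suc k) + (- shift_exp S (Suc k))" by simp
      then show "y k powi (a (Suc k) - shift_exp S (Suc k)) = y k powi a (Suc k) * y k powi (- shift_exp S (Suc k))"
        using power_int_add[OF disjI1[OF yk]] by metis
    qed
    also have "\<dots> = (\<Prod>k<\<alpha>. y k powi a (Suc k)) * (\<Prod>p\<in>S. y (fst p - 1) / y (snd p - 1))"
      using shift_prod[of S \<alpha> y] S y by (simp only: prod.distrib) simp
    moreover have "(\<Prod>p\<in>S. (- q) * (y (fst p - 1) / y (snd p - 1))) = (- q) ^ card S * (\<Prod>p\<in>S. y (fst p - 1) / y (snd p - 1))"
      by (simp only: prod.distrib prod_constant)
    ultimately show ?thesis by (simp only: mult_ac)
  qed
  have "(\<Sum>S\<in>Pow (pairs \<alpha>). (- q) ^ card S * (\<Prod>k<\<alpha>. y k powi (a (Suc k) - shift_exp S (Suc k))))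
      = (\<Prod>k<\<alpha>. y k powi a (Suc k)) * (\<Sum>S\<in>Pow (pairs \<alpha>). \<Prod>p\<in>S. (- q) * (y (fst p - 1) / y (snd p - 1)))"
    unfolding sum_distrib_left by (rule sum.cong[OF refl]) (rule e1)
  also have "(\<Sum>S\<in>Pow (pairs \<alpha>). \<Prod>p\<in>S. (- q) * (y (fst p - 1) / y (snd p - 1))) = (\<Prod>p\<in>pairs \<alpha>. (- q) * (y (fst p - 1) / y (snd p - 1)) + 1)"
    by (subst prod_add[OF finite_pairs]) simp
  finally show ?thesis .
qed

lemma pairs_prod:
  "(\<Prod>p\<in>pairs \<alpha>. g (fst p - 1) (snd p - 1)) = (\<Prod>l<\<alpha>. \<Prod>k<l. g k l)"
proof -
  have img: "pairs \<alpha> = (\<lambda>(l,k). (Suc k, Suc l)) ` (SIGMA l:{..<\<alpha>}. {..<l})"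
  proof (rule Set.set_eqI)
    fix p show "p \<in> pairs \<alpha> \<longleftrightarrow> p \<in> (\<lambda>(l,k). (Suc k, Suc l)) ` (SIGMA l:{..<\<alpha>}. {..<l})"
    proof
      assume "p \<in> pairs \<alpha>"
      then obtain i j where p: "p = (i,j)" "1 \<le> i" "i < j" "j \<le> \<alpha>" by (auto simp: pairs_def)
      then have "(j - 1, i - 1) \<in> (SIGMA l:{..<\<alpha>}. {..<l})" by auto
      moreover have "p = (\<lambda>(l,k). (Suc k, Suc l)) (j - 1, i - 1)" using p by auto
      ultimately show "p \<in> (\<lambda>(l,k). (Suc k, Suc l)) ` (SIGMA l:{..<\<alpha>}. {..<l})" by blast
    next
      assume "p \<in> (\<lambda>(l,k). (Suc k, Suc l)) ` (SIGMA l:{..<\<alpha>}. {..<l})"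
      then show "p \<in> pairs \<alpha>" by (auto simp: pairs_def)
    qed
  qed
  have inj: "inj_on (\<lambda>(l,k). (Suc k, Suc l)) (SIGMA l:{..<\<alpha>}. {..<l})" by (auto simp: inj_on_def)
  have "(\<Prod>p\<in>pairs \<alpha>. g (fst p - 1) (snd p - 1)) = (\<Prod>(l,k)\<in>(SIGMA l:{..<\<alpha>}. {..<l}). g k l)"
    unfolding img by (subst prod.reindex[OF inj]) (auto intro!: prod.cong)
  also have "\<dots> = (\<Prod>l<\<alpha>. \<Prod>k<l. g k l)" by (subst prod.Sigma) auto
  finally show ?thesis .
qed

lemma finite_ASM: "finite (ASM \<alpha>)"
proof -
  have "ASM \<alpha> \<subseteq> mat_of \<alpha> ` MT \<alpha> (e0 \<alpha>)"
  proof
    fix A assume A: "A \<in> ASM \<alpha>"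
    then have "A = mat_of \<alpha> (tri_of \<alpha> A)" by (simp add: mat_of_tri_of)
    then show "A \<in> mat_of \<alpha> ` MT \<alpha> (e0 \<alpha>)" using tri_of_MT[OF A] by blast
  qed
  then show ?thesis by (rule finite_subset) (simp add: finite_MT)
qed

lemma rhs_y:
  fixes y :: "nat \<Rightarrow> 'a::field"
  assumes y: "\<forall>k<\<alpha>. y k \<noteq> 0"
  shows "(\<Sum>A\<in>ASM \<alpha>. (- q) powi (inv_num \<alpha> A - int (neg_num \<alpha> A)) * (1 - q) ^ neg_num \<alpha> A *
           (\<Prod>k<\<alpha>. y k powi (a (Suc k) + int \<alpha> - int (Suc k) - mvec \<alpha> A (Suc k))))
     = (\<Prod>k<\<alpha>. y k powi a (Suc k)) * (\<Prod>k<\<alpha>. y k powi (- int k)) * Pq q y \<alpha>"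
proof -
  have e: "(\<Prod>k<\<alpha>. y k powi (a (Suc k) + int \<alpha> - int (Suc k) - mvec \<alpha> A (Suc k)))
      = (\<Prod>k<\<alpha>. y k powi a (Suc k)) * (\<Prod>k<\<alpha>. y k powi (- int k)) * (\<Prod>k<\<alpha>. y k powi (int \<alpha> - 1 - mvec \<alpha> A (Suc k)))" for A
  proof -
    have "(\<Prod>k<\<alpha>. y k powi (a (Suc k) + int \<alpha> - int (Suc k) - mvec \<alpha> A (Suc k)))
        = (\<Prod>k<\<alpha>. y k powi a (Suc k) * y k powi (- int k) * y k powi (int \<alpha> - 1 - mvec \<alpha> A (Suc k)))"
    proof (rule prod.cong[OF refl])
      fix k assume "k \<in> {..<\<alpha>}" then have yk: "y k \<noteq> 0" using y by auto
      have "a (Suc k) + int \<alpha> - int (Suc k) - mvec \<alpha> A (Suc k) = (a (Suc k) + (- int k)) + (int \<alpha> - 1 - mvec \<alpha> A (Suc k))"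
        by simp
      then show "y k powi (a (Suc k) + int \<alpha> - int (Suc k) - mvec \<alpha> A (Suc k)) = y k powi a (Suc k) * y k powi (- int k) * y k powi (int \<alpha> - 1 - mvec \<alpha> A (Suc k))"
        using power_int_add[OF disjI1[OF yk]] by metis
    qed
    then show ?thesis by (simp add: prod.distrib)
  qed
  have "(\<Sum>A\<in>ASM \<alpha>. (- q) powi (inv_num \<alpha> A - int (neg_num \<alpha> A)) * (1 - q) ^ neg_num \<alpha> A *
           (\<Prod>k<\<alpha>. y k powi (a (Suc k) + int \<alpha> - int (Suc k) - mvec \<alpha> A (Suc k))))
      = (\<Prod>k<\<alpha>. y k powi a (Suc k)) * (\<Prod>k<\<alpha>. y k powi (- int k)) * (\<Sum>A\<in>ASM \<alpha>. WA q y \<alpha> A)"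
    unfolding e WA_def sum_distrib_left by (intro sum.cong refl) (simp add: algebra_simps)
  also have "\<dots> = (\<Prod>k<\<alpha>. y k powi a (Suc k)) * (\<Prod>k<\<alpha>. y k powi (- int k)) * Pq q y \<alpha>"
    by (simp add: asm_sum)
  finally show ?thesis .
qed

lemma pairs_final:
  fixes y :: "nat \<Rightarrow> 'a::field"
  assumes y: "\<forall>k<\<alpha>. y k \<noteq> 0"
  shows "(\<Prod>p\<in>pairs \<alpha>. (- q) * (y (fst p - 1) / y (snd p - 1)) + 1) = (\<Prod>k<\<alpha>. y k powi (- int k)) * Pq q y \<alpha>"
proof -
  have "(\<Prod>p\<in>pairs \<alpha>. (- q) * (y (fst p - 1) / y (snd p - 1)) + 1) = (\<Prod>l<\<alpha>. \<Prod>k<l. (- q) * (y k / y l) + 1)"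
    by (rule pairs_prod)
  also have "\<dots> = (\<Prod>l<\<alpha>. (\<Prod>k<l. y l - q * y k) * inverse (y l) ^ l)"
  proof (rule prod.cong[OF refl])
    fix l assume "l \<in> {..<\<alpha>}" then have yl: "y l \<noteq> 0" using y by auto
    have "(\<Prod>k<l. (- q) * (y k / y l) + 1) = (\<Prod>k<l. (y l - q * y k) * inverse (y l))"
      using yl by (intro prod.cong refl) (simp add: field_simps)
    also have "\<dots> = (\<Prod>k<l. y l - q * y k) * inverse (y l) ^ l" by (simp add: prod.distrib)
    finally show "(\<Prod>k<l. (- q) * (y k / y l) + 1) = (\<Prod>k<l. y l - q * y k) * inverse (y l) ^ l" .
  qed
  also have "\<dots> = (\<Prod>k<\<alpha>. y k powi (- int k)) * Pq q y \<alpha>"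
    by (simp add: Pq_def prod.distrib power_int_minus power_inverse mult.commute)
  finally show ?thesis .
qed

theorem theorem4p6:
  fixes q :: "'a::field" and r \<alpha> :: nat and a :: "nat \<Rightarrow> int"
    and f :: "(nat \<Rightarrow> 'a) \<Rightarrow> 'a" and x :: "nat \<Rightarrow> 'a"
  assumes "\<alpha> \<ge> 1"
    and "q \<noteq> 0"
    and "\<forall>i\<in>{1..r+1}. x i \<noteq> 0"
    and "\<forall>i\<in>{1..r+1}. \<forall>j\<in>{1..r+1}. i \<noteq> j \<longrightarrow> (\<forall>k::int. x i \<noteq> q powi k * x j)"
  shows "Mcoef q (r+1) \<alpha> a f x =
    (\<Sum>A\<in>ASM \<alpha>. (- q) powi (inv_num \<alpha> A - int (neg_num \<alpha> A)) * (1 - q) ^ neg_num \<alpha> A *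
        opprod (map (\<lambda>i. Mop q (r+1) (a i + int \<alpha> - int i - mvec \<alpha> A i)) [1..<\<alpha>+1]) f x)"
proof -
  let ?N = "r + 1"
  have m1: "map (\<lambda>k. Mop q ?N (a k - shift_exp S k)) [1..<\<alpha>+1] = map (Mop q ?N) (map (\<lambda>k. a k - shift_exp S k) [1..<\<alpha>+1])" for S
    by simp
  have m2: "map (\<lambda>i. Mop q ?N (a i + int \<alpha> - int i - mvec \<alpha> A i)) [1..<\<alpha>+1] = map (Mop q ?N) (map (\<lambda>i. a i + int \<alpha> - int i - mvec \<alpha> A i) [1..<\<alpha>+1])" for A
    by simp
  show ?thesis
    unfolding Mcoef_def m1 m2
  proof (rule lin_expand[where L=\<alpha>])
    show "finite (Pow (pairs \<alpha>))" using finite_pairs by simp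
    show "finite (ASM \<alpha>)" by (rule finite_ASM)
    show "q \<noteq> 0" by fact
    show "\<forall>i\<in>{1..?N}. x i \<noteq> 0" using assms(3) by simp
    show "\<forall>s\<in>Pow (pairs \<alpha>). length (map (\<lambda>k. a k - shift_exp s k) [1..<\<alpha>+1]) = \<alpha>" by simp
    show "\<forall>t\<in>ASM \<alpha>. length (map (\<lambda>i. a i + int \<alpha> - int i - mvec \<alpha> t i) [1..<\<alpha>+1]) = \<alpha>" by simp
    show "\<forall>y::nat\<Rightarrow>'a. (\<forall>k<\<alpha>. y k \<noteq> 0) \<longrightarrow>
        (\<Sum>s\<in>Pow (pairs \<alpha>). (- q) ^ card s * (\<Prod>k<\<alpha>. y k powi (map (\<lambda>k. a k - shift_exp s k) [1..<\<alpha>+1] ! k))) =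
        (\<Sum>t\<in>ASM \<alpha>. (- q) powi (inv_num \<alpha> t - int (neg_num \<alpha> t)) * (1 - q) ^ neg_num \<alpha> t *
           (\<Prod>k<\<alpha>. y k powi (map (\<lambda>i. a i + int \<alpha> - int i - mvec \<alpha> t i) [1..<\<alpha>+1] ! k)))"
    proof (intro allI impI)
      fix y :: "nat \<Rightarrow> 'a" assume y: "\<forall>k<\<alpha>. y k \<noteq> 0"
      have n1: "(\<Prod>k<\<alpha>. y k powi (map (\<lambda>k. a k - shift_exp s k) [1..<\<alpha>+1] ! k)) = (\<Prod>k<\<alpha>. y k powi (a (Suc k) - shift_exp s (Suc k)))" for s
        by (intro prod.cong refl) (simp del: upt_Suc)
      have n2: "(\<Prod>k<\<alpha>. y k powi (map (\<lambda>i. a i + int \<alpha> - int i - mvec \<alpha> t i) [1..<\<alpha>+1] ! k))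
          = (\<Prod>k<\<alpha>. y k powi (a (Suc k) + int \<alpha> - int (Suc k) - mvec \<alpha> t (Suc k)))" for t
        by (intro prod.cong refl) (simp del: upt_Suc)
      show "(\<Sum>s\<in>Pow (pairs \<alpha>). (- q) ^ card s * (\<Prod>k<\<alpha>. y k powi (map (\<lambda>k. a k - shift_exp s k) [1..<\<alpha>+1] ! k))) =
        (\<Sum>t\<in>ASM \<alpha>. (- q) powi (inv_num \<alpha> t - int (neg_num \<alpha> t)) * (1 - q) ^ neg_num \<alpha> t *
           (\<Prod>k<\<alpha>. y k powi (map (\<lambda>i. a i + int \<alpha> - int i - mvec \<alpha> t i) [1..<\<alpha>+1] ! k)))"
        unfolding n1 n2 lhs_y[OF y] rhs_y[OF y] pairs_final[OF y] by (simp add: mult_ac)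
    qed
  qed
qed


end
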